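(* Let $\mathcal I\subset\mathbb K[x^*,y]$ be an $N$-admissible ideal. If $\phi\in S_\omega^M$ is an $\omega$-solution of $\mathcal I$, then its defining data sequence $\mathbf{seq}(\phi)$ is an $\omega$-sequence for $\mathcal I$.
   Context: Let $\mathbb K$ be an algebraically closed field of characteristic zero, $N,M$ positive integers, $\omega\in\mathbb R^N$ with coordinates linearly independent over $\mathbb Q$. $S_\omega$ is the field of $\omega$-positive Puiseux series: formal sums $\phi=\sum_{\alpha\in\mathbb Q^N}c_\alpha x^\alpha$ ($c_\alpha\in\mathbb K$) with exponent set $\mathcal E(\phi)$ contained in $\frac1k\mathbb Z^N$ for some $k$ and $\mathcal E(x^\gamma\phi)\subset\sigma$ for some $\gamma\in\mathbb Q^N$ and some rational polyhedral cone $\sigma$ with $v\cdot\omega\ge0$ on $\sigma$. $\operatorname{ord}_\omega(\phi)=\min_{\alpha\in\mathcal E(\phi)}\omega\cdot\alpha$, $\operatorname{in}_\omega(\phi)$ the term attaining it ($\operatorname{ord}_\omega0=\infty$, $\operatorname{in}_\omega0=0$), componentwise on $S_\omega^M$. Conventions $\infty\cdot a=\infty$ ($a\ne0$), $\infty\cdot0=0$, $\infty>r$; $\Lambda(\eta)=\{i:\eta_i\ne\infty\}$. $\mathbb K[x^*,y]=\mathbb K[x_1^{\pm1},\dots,x_N^{\pm1},y_1,\dots,y_M]$. For $\omega'\in\mathbb R^N$, $\eta\in(\mathbb R\cup\{\infty\})^M$, $f=\sum a_{\alpha,\beta}x^\alpha y^\beta$: $\operatorname{ord}_{\omega',\eta}(f)=\min_{a_{\alpha,\beta}\ne0}(\omega'\cdot\alpha+\eta\cdot\beta)$;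 $\operatorname{in}_{\omega',\eta}(f)$ the sum of terms attaining it if finite, else $0$; $\operatorname{In}_{\omega',\eta}\mathcal J$ generated by $\{\operatorname{in}_{\omega',\eta}f:f\in\mathcal J\}\cup\{y_i:i\notin\Lambda(\eta)\}$. $\tau(\mathcal J)=\{(\omega',\eta): \operatorname{In}_{\omega',\eta}\mathcal J\cap\mathbb K[x^*,(y_i)_{i\in\Lambda(\eta)}]\text{ contains no monomial } cx^\alpha y^\beta, c\ne0\}$. An $\omega$-solution of $\mathcal J$ is $\varphi\in S_\omega^M$ with $f(x,\varphi)=0$ for all $f\in\mathcal J$. $\mathcal I$ is $N$-admissible if, for $J=\mathcal I\cap\mathbb K[x_1,\dots,x_N,y]$, the projection $(x,y)\mapsto x$ from the zero set of $J$ in $\mathbb K^{N+M}$ to $\mathbb K^N$ is dominant with finite generic fibre. An $\omega$-set is $D=\{\eta,\Gamma,c\}$, $\eta\in(\mathbb R\cup\{\infty\})^M$, $\Gamma$ an $M\times N$ matrix over $\mathbb Q\cup\{\infty\}$, $c\in\mathbb K^M$, with: for $i\in\Lambda(\eta)$, $\Gamma_{i,*}\in\mathbb Q^N$, $\omega\cdot\Gamma_{i,*}=\eta_i$, $c_i\ne0$; for $i\notin\Lambda(\eta)$, $\Gamma_{i,*}=(\infty,\dots,\infty)$, $c_i=0$. $\mathfrak M_D=(c_ix^{\Gamma_{i,*}})_i$ (entry $0$ if $i\notin\Lambda(\eta)$). A starting $\omega$-set for $\mathcal J$: an $\omega$-set with $(\omega,\eta)\in\tau(\mathcal J)$ and $c$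 a common zero of $\{f(1,\dots,1,y):f\in\operatorname{In}_{\omega,\eta}\mathcal J\}$. $\mathbf d\Gamma$: least positive integer $k$ with $k\Gamma_{i,j}\in\mathbb Z$ for all finite entries; $x^{rI}=(x_1^r,\dots,x_N^r)$; $\mathcal J_D$ is generated by $\{f(x^{\mathbf d\Gamma I},y+\mathfrak M_D(x^{\mathbf d\Gamma I})):f\in\mathcal J\}$. For an $M$-tuple of monomials $\mathfrak m=(a_1x^{\gamma_1},\dots,a_Mx^{\gamma_M})$, its defining data is $D(\mathfrak m)=\{\operatorname{ord}_\omega\mathfrak m,\Gamma,(a_1,\dots,a_M)\}$, where $\Gamma_{i,*}=\gamma_i$ if $a_i\ne0$ and $\Gamma_{i,*}=(\infty,\dots,\infty)$ if $a_i=0$. The defining data sequence $\mathbf{seq}(\phi)=\{D^{(i)}\}_{i\ge0}$, $D^{(i)}=\{\eta^{(i)},\Gamma^{(i)},c^{(i)}\}$, is defined by $\phi^{(0)}=\phi$, $D^{(0)}=D(\operatorname{in}_\omega\phi)$, and for $i>0$: $\phi^{(i)}=\phi^{(i-1)}(x^{\mathbf d\Gamma^{(i-1)}I})-\mathfrak M_{D^{(i-1)}}(x^{\mathbf d\Gamma^{(i-1)}I})$, $D^{(i)}=D(\operatorname{in}_\omega\phi^{(i)})$. With $\mathcal I^{(0)}=\mathcal I$, $\mathcal I^{(i)}=(\mathcal I^{(i-1)})_{D^{(i-1)}}$, a sequence of $\omega$-sets $\{D^{(i)}\}$ is an $\omega$-sequence for $\mathcal I$ if each $D^{(i)}$ is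 a starting $\omega$-set for $\mathcal I^{(i)}$ and, for $i\ge1$, $\eta^{(i)}_j>\mathbf d\Gamma^{(i-1)}\eta^{(i-1)}_j$ for all $j\in\Lambda(\eta^{(i)})$. *)

theory Defs
  imports "HOL-Library.Poly_Mapping" "HOL-Library.Function_Algebras" "HOL-Library.Product_Plus"
          "HOL-Library.Extended_Real" "HOL-Computational_Algebra.Polynomial"
begin

(* N and M are the cardinalities of the finite index types 'n and 'm.
   The field K is a type 'k :: field_char_0, assumed algebraically closed in the theorem. *)

definition alg_closed :: "'k::field itself \<Rightarrow> bool" where
  "alg_closed _ \<longleftrightarrow> (\<forall>p::'k poly. degree p \<ge> 1 \<longrightarrow> (\<exists>z. poly p z = 0))"

definition Q_lin_indep :: "('n::finite \<Rightarrow> real) \<Rightarrow> bool" where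
  "Q_lin_indep \<omega> \<longleftrightarrow> (\<forall>q::'n \<Rightarrow> rat. (\<Sum>i\<in>UNIV. of_rat (q i) * \<omega> i) = 0 \<longrightarrow> (\<forall>i. q i = 0))"

(* exponent (alpha, beta) of x^alpha y^beta, alpha in Z^N, beta in N^M *)
type_synonym ('n,'m) lexp = "('n \<Rightarrow> int) \<times> ('m \<Rightarrow> nat)"
type_synonym ('n,'m,'k) lpoly = "('n,'m) lexp \<Rightarrow>\<^sub>0 'k"

definition mono :: "'k::zero \<Rightarrow> ('n \<Rightarrow> int) \<Rightarrow> ('m \<Rightarrow> nat) \<Rightarrow> ('n,'m,'k) lpoly" where
  "mono c a b = Poly_Mapping.single (a, b) c"

definition yvar :: "'m \<Rightarrow> ('n,'m,'k::{zero,one}) lpoly" where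
  "yvar j = mono 1 0 (\<lambda>i. if i = j then 1 else 0)"

definition is_ideal :: "('n,'m,'k::comm_ring_1) lpoly set \<Rightarrow> bool" where
  "is_ideal J \<longleftrightarrow> 0 \<in> J \<and> (\<forall>f\<in>J. \<forall>g\<in>J. f + g \<in> J) \<and> (\<forall>r. \<forall>f\<in>J. r * f \<in> J)"

definition ideal_gen :: "('n,'m,'k::comm_ring_1) lpoly set \<Rightarrow> ('n,'m,'k) lpoly set" where
  "ideal_gen S = \<Inter>{J. is_ideal J \<and> S \<subseteq> J}"

type_synonym ('n,'k) series = "('n \<Rightarrow> rat) \<Rightarrow> 'k"

definition supp :: "('n,'k::zero) series \<Rightarrow> ('n \<Rightarrow> rat) set" where
  "supp \<phi> = {a. \<phi> a \<noteq> 0}"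

definition wdot :: "('n::finite \<Rightarrow> real) \<Rightarrow> ('n \<Rightarrow> rat) \<Rightarrow> real" where
  "wdot \<omega> a = (\<Sum>i\<in>UNIV. \<omega> i * of_rat (a i))"

definition rat_cone :: "('n::finite \<Rightarrow> rat) set \<Rightarrow> ('n \<Rightarrow> real) set" where
  "rat_cone V = {v. \<exists>l. (\<forall>u\<in>V. l u \<ge> (0::real)) \<and> v = (\<lambda>i. \<Sum>u\<in>V. l u * of_rat (u i))}"

definition omega_positive :: "('n::finite \<Rightarrow> real) \<Rightarrow> ('n,'k::zero) series \<Rightarrow> bool" where
  "omega_positive \<omega> \<phi> \<longleftrightarrow>
     (\<exists>k::nat. k > 0 \<and> (\<forall>a\<in>supp \<phi>. \<forall>i. of_nat k * a i \<in> \<int>)) \<and>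
     (\<exists>\<gamma>::'n \<Rightarrow> rat. \<exists>V. finite V \<and>
        (\<forall>v\<in>rat_cone V. (\<Sum>i\<in>UNIV. v i * \<omega> i) \<ge> 0) \<and>
        (\<forall>a\<in>supp \<phi>. (\<lambda>i. of_rat (a i + \<gamma> i)) \<in> rat_cone V))"

definition ord_s :: "('n::finite \<Rightarrow> real) \<Rightarrow> ('n,'k::zero) series \<Rightarrow> ereal" where
  "ord_s \<omega> \<phi> = Inf ((\<lambda>a. ereal (wdot \<omega> a)) ` supp \<phi>)"

definition in_s :: "('n::finite \<Rightarrow> real) \<Rightarrow> ('n,'k::zero) series \<Rightarrow> ('n,'k) series" where
  "in_s \<omega> \<phi> = (\<lambda>a. if ereal (wdot \<omega> a) = ord_s \<omega> \<phi> then \<phi> a else 0)"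

(* coefficient at gamma of the product prod_j phi_j^{beta_j} *)
definition pow_prod_coeff :: "('m::finite \<Rightarrow> ('n,'k::comm_ring_1) series) \<Rightarrow> ('m \<Rightarrow> nat) \<Rightarrow> ('n \<Rightarrow> rat) \<Rightarrow> 'k" where
  "pow_prod_coeff \<phi> \<beta> \<gamma> =
     (\<Sum>e\<in>{e :: 'm \<Rightarrow> nat \<Rightarrow> ('n \<Rightarrow> rat).
             (\<forall>j l. \<beta> j \<le> l \<longrightarrow> e j l = 0) \<and> (\<forall>j l. l < \<beta> j \<longrightarrow> \<phi> j (e j l) \<noteq> 0) \<and>
             (\<Sum>j\<in>UNIV. \<Sum>l<\<beta> j. e j l) = \<gamma>}.
        \<Prod>j\<in>UNIV. \<Prod>l<\<beta> j. \<phi> j (e j l))"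

definition eval_series :: "('n,'m::finite,'k::comm_ring_1) lpoly \<Rightarrow> ('m \<Rightarrow> ('n,'k) series) \<Rightarrow> ('n,'k) series" where
  "eval_series f \<phi> = (\<lambda>\<gamma>. \<Sum>p\<in>Poly_Mapping.keys f. Poly_Mapping.lookup f p * pow_prod_coeff \<phi> (snd p) (\<gamma> - (\<lambda>i. of_int (fst p i))))"

definition omega_solution :: "('n::finite \<Rightarrow> real) \<Rightarrow> ('n,'m::finite,'k::comm_ring_1) lpoly set \<Rightarrow> ('m \<Rightarrow> ('n,'k) series) \<Rightarrow> bool" where
  "omega_solution \<omega> J \<phi> \<longleftrightarrow> (\<forall>j. omega_positive \<omega> (\<phi> j)) \<and> (\<forall>f\<in>J. eval_series f \<phi> = (\<lambda>_. 0))"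

definition poly_part :: "('n,'m,'k::comm_ring_1) lpoly set \<Rightarrow> ('n,'m,'k) lpoly set" where
  "poly_part I = {f\<in>I. \<forall>p\<in>Poly_Mapping.keys f. \<forall>i. fst p i \<ge> 0}"

definition eval_pt :: "('n::finite,'m::finite,'k::comm_ring_1) lpoly \<Rightarrow> ('n \<Rightarrow> 'k) \<Rightarrow> ('m \<Rightarrow> 'k) \<Rightarrow> 'k" where
  "eval_pt f a b = (\<Sum>p\<in>Poly_Mapping.keys f. Poly_Mapping.lookup f p * (\<Prod>i\<in>UNIV. a i ^ nat (fst p i)) * (\<Prod>j\<in>UNIV. b j ^ snd p j))"

definition zero_set :: "('n::finite,'m::finite,'k::comm_ring_1) lpoly set \<Rightarrow> (('n \<Rightarrow> 'k) \<times> ('m \<Rightarrow> 'k)) set" where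
  "zero_set J = {(a, b). \<forall>f\<in>J. eval_pt f a b = 0}"

definition x_polys :: "('n,'m,'k::comm_ring_1) lpoly set" where
  "x_polys = {g. \<forall>p\<in>Poly_Mapping.keys g. (\<forall>i. fst p i \<ge> 0) \<and> snd p = 0}"

definition admissible :: "('n::finite,'m::finite,'k::comm_ring_1) lpoly set \<Rightarrow> bool" where
  "admissible I \<longleftrightarrow>
    (let V = zero_set (poly_part I) in
      \<comment> \<open>dominant: no nonzero polynomial in x vanishes on the projection of V\<close>
      (\<forall>g\<in>x_polys. (\<forall>(a, b)\<in>V. eval_pt g a b = 0) \<longrightarrow> g = 0) \<and>
      \<comment> \<open>finite generic fibre: finite fibres outside a proper hypersurface\<close>
      (\<exists>h\<in>x_polys. (h::('n,'m,'k) lpoly) \<noteq> 0 \<and> (\<forall>a. eval_pt h a 0 \<noteq> 0 \<longrightarrow> finite {b. (a, b) \<in> V})))"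

definition Lam :: "('m \<Rightarrow> ereal) \<Rightarrow> 'm set" where
  "Lam \<eta> = {i. \<eta> i \<noteq> \<infinity>}"

definition wt :: "('n::finite \<Rightarrow> real) \<Rightarrow> ('m::finite \<Rightarrow> ereal) \<Rightarrow> ('n,'m) lexp \<Rightarrow> ereal" where
  "wt \<omega> \<eta> p = ereal (\<Sum>i\<in>UNIV. \<omega> i * of_int (fst p i)) + (\<Sum>j\<in>UNIV. \<eta> j * ereal (of_nat (snd p j)))"

definition ord_p :: "('n::finite \<Rightarrow> real) \<Rightarrow> ('m::finite \<Rightarrow> ereal) \<Rightarrow> ('n,'m,'k::zero) lpoly \<Rightarrow> ereal" where
  "ord_p \<omega> \<eta> f = Inf (wt \<omega> \<eta> ` Poly_Mapping.keys f)"

definition in_p :: "('n::finite \<Rightarrow> real) \<Rightarrow> ('m::finite \<Rightarrow> ereal) \<Rightarrow> ('n,'m,'k::zero) lpoly \<Rightarrow> ('n,'m,'k) lpoly" where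
  "in_p \<omega> \<eta> f = (if ord_p \<omega> \<eta> f = \<infinity> then 0
     else Abs_poly_mapping (\<lambda>p. if wt \<omega> \<eta> p = ord_p \<omega> \<eta> f then Poly_Mapping.lookup f p else 0))"

definition In_ideal :: "('n::finite \<Rightarrow> real) \<Rightarrow> ('m::finite \<Rightarrow> ereal) \<Rightarrow> ('n,'m,'k::comm_ring_1) lpoly set \<Rightarrow> ('n,'m,'k) lpoly set" where
  "In_ideal \<omega> \<eta> J = ideal_gen (in_p \<omega> \<eta> ` J \<union> yvar ` (- Lam \<eta>))"

definition in_tau :: "('n::finite \<Rightarrow> real) \<Rightarrow> ('m::finite \<Rightarrow> ereal) \<Rightarrow> ('n,'m,'k::comm_ring_1) lpoly set \<Rightarrow> bool" where
  "in_tau \<omega> \<eta> J \<longleftrightarrow> \<not> (\<exists>c a b. c \<noteq> 0 \<and> (\<forall>j. j \<notin> Lam \<eta> \<longrightarrow> b j = 0) \<and> mono c a b \<in> In_ideal \<omega> \<eta> J)"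

(* D = (eta, Gamma, c); Gamma entries in Q \<union> {\<infinity>}, None meaning \<infinity> *)
type_synonym ('n,'m,'k) wset = "('m \<Rightarrow> ereal) \<times> ('m \<Rightarrow> 'n \<Rightarrow> rat option) \<times> ('m \<Rightarrow> 'k)"

definition omega_set :: "('n::finite \<Rightarrow> real) \<Rightarrow> ('n,'m,'k::zero) wset \<Rightarrow> bool" where
  "omega_set \<omega> D \<longleftrightarrow> (case D of (\<eta>, \<Gamma>, c) \<Rightarrow>
     (\<forall>i. \<eta> i \<noteq> -\<infinity>) \<and>
     (\<forall>i\<in>Lam \<eta>. (\<forall>j. \<Gamma> i j \<noteq> None) \<and> ereal (wdot \<omega> (\<lambda>j. the (\<Gamma> i j))) = \<eta> i \<and> c i \<noteq> 0) \<and>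
     (\<forall>i. i \<notin> Lam \<eta> \<longrightarrow> (\<forall>j. \<Gamma> i j = None) \<and> c i = 0))"

definition eval_one :: "('n,'m::finite,'k::comm_ring_1) lpoly \<Rightarrow> ('m \<Rightarrow> 'k) \<Rightarrow> 'k" where
  "eval_one f c = (\<Sum>p\<in>Poly_Mapping.keys f. Poly_Mapping.lookup f p * (\<Prod>j\<in>UNIV. c j ^ snd p j))"

definition starting_set :: "('n::finite \<Rightarrow> real) \<Rightarrow> ('n,'m::finite,'k::comm_ring_1) lpoly set \<Rightarrow> ('n,'m,'k) wset \<Rightarrow> bool" where
  "starting_set \<omega> J D \<longleftrightarrow> (case D of (\<eta>, \<Gamma>, c) \<Rightarrow>
     omega_set \<omega> D \<and> in_tau \<omega> \<eta> J \<and> (\<forall>f\<in>In_ideal \<omega> \<eta> J. eval_one f c = 0))"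

definition dG :: "('m \<Rightarrow> 'n \<Rightarrow> rat option) \<Rightarrow> nat" where
  "dG \<Gamma> = (LEAST k::nat. k > 0 \<and> (\<forall>i j q. \<Gamma> i j = Some q \<longrightarrow> of_nat k * q \<in> \<int>))"

definition subst_D :: "('n,'m,'k) wset \<Rightarrow> ('n,'m::finite,'k::comm_ring_1) lpoly \<Rightarrow> ('n,'m,'k) lpoly" where
  "subst_D D f = (case D of (\<eta>, \<Gamma>, c) \<Rightarrow> let k = dG \<Gamma> in
     (\<Sum>p\<in>Poly_Mapping.keys f. mono (Poly_Mapping.lookup f p) (\<lambda>i. int k * fst p i) 0 *
        (\<Prod>j\<in>UNIV. (yvar j + (if \<Gamma> j = (\<lambda>_. None) then 0
              else mono (c j) (\<lambda>i. \<lfloor>of_nat k * the (\<Gamma> j i)\<rfloor>) 0)) ^ snd p j)))"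

definition ideal_D :: "('n,'m,'k) wset \<Rightarrow> ('n,'m::finite,'k::comm_ring_1) lpoly set \<Rightarrow> ('n,'m,'k) lpoly set" where
  "ideal_D D J = ideal_gen (subst_D D ` J)"

primrec ideal_seq :: "('n,'m::finite,'k::comm_ring_1) lpoly set \<Rightarrow> (nat \<Rightarrow> ('n,'m,'k) wset) \<Rightarrow> nat \<Rightarrow> ('n,'m,'k) lpoly set" where
  "ideal_seq I Ds 0 = I"
| "ideal_seq I Ds (Suc i) = ideal_D (Ds i) (ideal_seq I Ds i)"

definition omega_sequence :: "('n::finite \<Rightarrow> real) \<Rightarrow> ('n,'m::finite,'k::comm_ring_1) lpoly set \<Rightarrow> (nat \<Rightarrow> ('n,'m,'k) wset) \<Rightarrow> bool" where
  "omega_sequence \<omega> I Ds \<longleftrightarrow>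
     (\<forall>i. starting_set \<omega> (ideal_seq I Ds i) (Ds i)) \<and>
     (\<forall>i\<ge>1. \<forall>j\<in>Lam (fst (Ds i)).
        fst (Ds i) j > ereal (of_nat (dG (fst (snd (Ds (i - 1)))))) * fst (Ds (i - 1)) j)"

(* D(in_omega phi): componentwise, in_omega phi_j is a single term (or 0) *)
definition def_data :: "('n::finite \<Rightarrow> real) \<Rightarrow> ('m \<Rightarrow> ('n,'k::zero) series) \<Rightarrow> ('n,'m,'k) wset" where
  "def_data \<omega> \<phi> =
     (\<lambda>j. ord_s \<omega> (\<phi> j),
      \<lambda>j. if supp (in_s \<omega> (\<phi> j)) = {} then (\<lambda>_. None)
          else (\<lambda>i. Some ((THE a. a \<in> supp (in_s \<omega> (\<phi> j))) i)),
      \<lambda>j. if supp (in_s \<omega> (\<phi> j)) = {} then 0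
          else in_s \<omega> (\<phi> j) (THE a. a \<in> supp (in_s \<omega> (\<phi> j))))"

definition series_step :: "('n,'m,'k) wset \<Rightarrow> ('m \<Rightarrow> ('n,'k::comm_ring_1) series) \<Rightarrow> ('m \<Rightarrow> ('n,'k) series)" where
  "series_step D \<phi> = (case D of (\<eta>, \<Gamma>, c) \<Rightarrow> let k = dG \<Gamma> in
     (\<lambda>j \<gamma>. \<phi> j (\<lambda>i. \<gamma> i / of_nat k) -
        (if \<Gamma> j \<noteq> (\<lambda>_. None) \<and> \<gamma> = (\<lambda>i. of_nat k * the (\<Gamma> j i)) then c j else 0)))"

primrec phi_seq :: "('n::finite \<Rightarrow> real) \<Rightarrow> ('m \<Rightarrow> ('n,'k::comm_ring_1) series) \<Rightarrow> nat \<Rightarrow> ('m \<Rightarrow> ('n,'k) series)" where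
  "phi_seq \<omega> \<phi> 0 = \<phi>"
| "phi_seq \<omega> \<phi> (Suc i) = series_step (def_data \<omega> (phi_seq \<omega> \<phi> i)) (phi_seq \<omega> \<phi> i)"

definition seq :: "('n::finite \<Rightarrow> real) \<Rightarrow> ('m \<Rightarrow> ('n,'k::comm_ring_1) series) \<Rightarrow> nat \<Rightarrow> ('n,'m,'k) wset" where
  "seq \<omega> \<phi> i = def_data \<omega> (phi_seq \<omega> \<phi> i)"

end

theory Submission
  imports Defs "HOL-Library.FuncSet"
begin



lemma pm_expand: "(f :: 'a \<Rightarrow>\<^sub>0 'b::comm_monoid_add) = (\<Sum>p\<in>Poly_Mapping.keys f. Poly_Mapping.single p (Poly_Mapping.lookup f p))"
proof (rule poly_mapping_eqI)
  fix k
  have "Poly_Mapping.lookup (\<Sum>p\<in>Poly_Mapping.keys f. Poly_Mapping.single p (Poly_Mapping.lookup f p)) k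
     = (\<Sum>p\<in>Poly_Mapping.keys f. (if p = k then Poly_Mapping.lookup f p else 0))"
    by (simp add: lookup_sum lookup_single when_def)
  also have "\<dots> = Poly_Mapping.lookup f k"
    by (simp add: in_keys_iff)
  finally show "Poly_Mapping.lookup f k = Poly_Mapping.lookup (\<Sum>p\<in>Poly_Mapping.keys f. Poly_Mapping.single p (Poly_Mapping.lookup f p)) k" by simp
qed

definition lext :: "('b::zero \<Rightarrow> 'r) \<Rightarrow> ('a \<Rightarrow> 'r) \<Rightarrow> ('a \<Rightarrow>\<^sub>0 'b) \<Rightarrow> 'r::comm_ring_1" where
  "lext h \<chi> f = (\<Sum>p\<in>Poly_Mapping.keys f. h (Poly_Mapping.lookup f p) * \<chi> p)"

locale lhom =
  fixes h :: "'b::comm_ring_1 \<Rightarrow> 'r::comm_ring_1" and \<chi> :: "'a::comm_monoid_add \<Rightarrow> 'r"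
  assumes h_add: "h (x + y) = h x + h y" and h_mult: "h (x * y) = h x * h y" and h_one: "h 1 = 1"
    and chi_add: "\<chi> (a + b) = \<chi> a * \<chi> b" and chi_zero: "\<chi> 0 = 1"
begin

lemma h_zero: "h 0 = 0"
  using h_add[of 0 0] by simp

lemma lext_superset:
  assumes "finite S" "Poly_Mapping.keys f \<subseteq> S"
  shows "lext h \<chi> f = (\<Sum>p\<in>S. h (Poly_Mapping.lookup f p) * \<chi> p)"
  unfolding lext_def
  by (rule sum.mono_neutral_left) (use assms in \<open>auto simp: in_keys_iff h_zero\<close>)

lemma lext_add: "lext h \<chi> (f + g) = lext h \<chi> f + lext h \<chi> g"
proof -
  let ?S = "Poly_Mapping.keys f \<union> Poly_Mapping.keys g"
  have "lext h \<chi> (f + g) = (\<Sum>p\<in>?S. h (Poly_Mapping.lookup (f+g) p) * \<chi> p)"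
    by (rule lext_superset) (auto simp: keys_add)
  also have "\<dots> = (\<Sum>p\<in>?S. h (Poly_Mapping.lookup f p) * \<chi> p) + (\<Sum>p\<in>?S. h (Poly_Mapping.lookup g p) * \<chi> p)"
    by (simp add: lookup_add h_add distrib_right sum.distrib)
  also have "\<dots> = lext h \<chi> f + lext h \<chi> g"
    by (subst (1 2) lext_superset[where S = ?S]) auto
  finally show ?thesis .
qed

lemma lext_zero: "lext h \<chi> 0 = 0"
  by (simp add: lext_def)

lemma lext_single: "lext h \<chi> (Poly_Mapping.single a c) = h c * \<chi> a"
  by (subst lext_superset[where S = "{a}"]) (auto simp: h_zero)

lemma lext_sum: "lext h \<chi> (\<Sum>i\<in>A. F i) = (\<Sum>i\<in>A. lext h \<chi> (F i))"
  by (induction A rule: infinite_finite_induct) (auto simp: lext_zero lext_add)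

lemma lext_mult: "lext h \<chi> (f * g) = lext h \<chi> f * lext h \<chi> g"
proof -
  have "f * g = (\<Sum>p\<in>Poly_Mapping.keys f. Poly_Mapping.single p (Poly_Mapping.lookup f p)) *
       (\<Sum>q\<in>Poly_Mapping.keys g. Poly_Mapping.single q (Poly_Mapping.lookup g q))"
    by (subst (1) pm_expand[of f], subst (1) pm_expand[of g]) simp
  also have "\<dots> = (\<Sum>p\<in>Poly_Mapping.keys f. \<Sum>q\<in>Poly_Mapping.keys g.
       Poly_Mapping.single (p + q) (Poly_Mapping.lookup f p * Poly_Mapping.lookup g q))"
    by (simp add: sum_product mult_single)
  finally have "lext h \<chi> (f * g) = (\<Sum>p\<in>Poly_Mapping.keys f. \<Sum>q\<in>Poly_Mapping.keys g.
       h (Poly_Mapping.lookup f p) * \<chi> p * (h (Poly_Mapping.lookup g q) * \<chi> q))"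
    by (simp add: lext_sum lext_single h_mult chi_add mult_ac)
  also have "\<dots> = lext h \<chi> f * lext h \<chi> g"
    by (simp add: lext_def sum_product)
  finally show ?thesis .
qed

lemma lext_one: "lext h \<chi> 1 = 1"
  using lext_single[of 0 1] by (simp add: h_one chi_zero)

lemma lext_prod: "lext h \<chi> (\<Prod>i\<in>A. F i) = (\<Prod>i\<in>A. lext h \<chi> (F i))"
  by (induction A rule: infinite_finite_induct) (auto simp: lext_one lext_mult)

lemma lext_power: "lext h \<chi> (f ^ n) = lext h \<chi> f ^ n"
  by (induction n) (auto simp: lext_one lext_mult)

lemma lext_uminus: "lext h \<chi> (- f) = - lext h \<chi> f"
  using lext_add[of f "-f"] by (simp add: lext_zero eq_neg_iff_add_eq_0 add.commute)

lemma lext_diff: "lext h \<chi> (f - g) = lext h \<chi> f - lext h \<chi> g"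
  using lext_add[of f "-g"] by (simp add: lext_uminus)

end




type_synonym ('n,'k) pp = "('n \<Rightarrow> rat) \<Rightarrow>\<^sub>0 'k"

lemma wdot_add: "wdot \<omega> (a + b) = wdot \<omega> a + wdot \<omega> b"
  by (simp add: wdot_def of_rat_add distrib_left sum.distrib)

lemma wdot_zero[simp]: "wdot \<omega> 0 = 0"
  by (simp add: wdot_def)

lemma wdot_uminus: "wdot \<omega> (- a) = - wdot \<omega> a"
  by (simp add: wdot_def of_rat_minus sum_negf)

lemma wdot_diff: "wdot \<omega> (a - b) = wdot \<omega> a - wdot \<omega> b"
  by (simp add: wdot_def of_rat_diff right_diff_distrib sum_subtractf)

lemma wdot_sum: "wdot \<omega> (\<Sum>i\<in>A. F i) = (\<Sum>i\<in>A. wdot \<omega> (F i))"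
proof (induction A rule: infinite_finite_induct)
  case (infinite A) then show ?case by (metis sum.infinite wdot_zero)
next
  case empty then show ?case by (simp only: sum.empty wdot_zero)
next
  case (insert x B) then show ?case using sum.insert[of B x F] sum.insert[of B x "\<lambda>i. wdot \<omega> (F i)"] wdot_add[of \<omega> "F x" "sum F B"] by metis
qed

lemma wdot_scale: "wdot \<omega> (\<lambda>i. q * a i) = of_rat q * wdot \<omega> a"
  by (simp add: wdot_def of_rat_mult sum_distrib_left mult_ac)

definition LB :: "('n::finite \<Rightarrow> real) \<Rightarrow> ('n,'k::zero) pp \<Rightarrow> real \<Rightarrow> bool" where
  "LB \<omega> P b \<longleftrightarrow> (\<forall>\<gamma>\<in>Poly_Mapping.keys P. b \<le> wdot \<omega> \<gamma>)"
definition LBs :: "('n::finite \<Rightarrow> real) \<Rightarrow> ('n,'k::zero) pp \<Rightarrow> real \<Rightarrow> bool" where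
  "LBs \<omega> P b \<longleftrightarrow> (\<forall>\<gamma>\<in>Poly_Mapping.keys P. b < wdot \<omega> \<gamma>)"
definition UB :: "('n::finite \<Rightarrow> real) \<Rightarrow> ('n,'k::zero) pp \<Rightarrow> real \<Rightarrow> bool" where
  "UB \<omega> P b \<longleftrightarrow> (\<forall>\<gamma>\<in>Poly_Mapping.keys P. wdot \<omega> \<gamma> \<le> b)"

lemma keys_uminus_pm: "Poly_Mapping.keys (- (P :: ('a \<Rightarrow>\<^sub>0 'b::ab_group_add))) = Poly_Mapping.keys P"
  by (auto simp: in_keys_iff)

lemma keys_diff_pm: "Poly_Mapping.keys ((P :: ('a \<Rightarrow>\<^sub>0 'b::ab_group_add)) - Q) \<subseteq> Poly_Mapping.keys P \<union> Poly_Mapping.keys Q"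
  by (auto simp: in_keys_iff lookup_minus)

lemma LB_add: "LB \<omega> P b \<Longrightarrow> LB \<omega> Q b \<Longrightarrow> LB \<omega> (P + Q) b"
  using keys_add[of P Q] by (auto simp: LB_def)
lemma LBs_add: "LBs \<omega> P b \<Longrightarrow> LBs \<omega> Q b \<Longrightarrow> LBs \<omega> (P + Q) b"
  using keys_add[of P Q] by (auto simp: LBs_def)
lemma UB_add: "UB \<omega> P b \<Longrightarrow> UB \<omega> Q b \<Longrightarrow> UB \<omega> (P + Q) b"
  using keys_add[of P Q] by (auto simp: UB_def)
lemma LB_diff: "LB \<omega> P b \<Longrightarrow> LB \<omega> Q b \<Longrightarrow> LB \<omega> (P - (Q::('n::finite,'k::ab_group_add) pp)) b"
  using keys_diff_pm[of P Q] by (auto simp: LB_def)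
lemma LBs_diff: "LBs \<omega> P b \<Longrightarrow> LBs \<omega> Q b \<Longrightarrow> LBs \<omega> (P - (Q::('n::finite,'k::ab_group_add) pp)) b"
  using keys_diff_pm[of P Q] by (auto simp: LBs_def)
lemma LB_zero[simp]: "LB \<omega> 0 b" by (simp add: LB_def)
lemma LBs_zero[simp]: "LBs \<omega> 0 b" by (simp add: LBs_def)
lemma UB_zero[simp]: "UB \<omega> 0 b" by (simp add: UB_def)
lemma LB_single: "wdot \<omega> \<gamma> \<ge> b \<Longrightarrow> LB \<omega> (Poly_Mapping.single \<gamma> c) b" by (simp add: LB_def)
lemma UB_single: "wdot \<omega> \<gamma> \<le> b \<Longrightarrow> UB \<omega> (Poly_Mapping.single \<gamma> c) b" by (simp add: UB_def)
lemma LB_mono: "LB \<omega> P b \<Longrightarrow> b' \<le> b \<Longrightarrow> LB \<omega> P b'" by (force simp: LB_def)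
lemma LBs_mono: "LBs \<omega> P b \<Longrightarrow> b' \<le> b \<Longrightarrow> LBs \<omega> P b'" by (force simp: LBs_def)
lemma UB_mono: "UB \<omega> P b \<Longrightarrow> b \<le> b' \<Longrightarrow> UB \<omega> P b'" by (force simp: UB_def)
lemma LBs_of_LB: "LB \<omega> P b \<Longrightarrow> b' < b \<Longrightarrow> LBs \<omega> P b'" by (force simp: LB_def LBs_def)
lemma LBs_LB: "LBs \<omega> P b \<Longrightarrow> LB \<omega> P b" by (force simp: LB_def LBs_def)

lemma LB_mult: "LB \<omega> P a \<Longrightarrow> LB \<omega> Q b \<Longrightarrow> LB \<omega> (P * (Q::('n::finite,'k::comm_semiring_0) pp)) (a + b)"
  using keys_mult[of P Q] by (force simp: LB_def wdot_add intro: add_mono)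
lemma LBs_mult1: "LBs \<omega> P a \<Longrightarrow> LB \<omega> Q b \<Longrightarrow> LBs \<omega> (P * (Q::('n::finite,'k::comm_semiring_0) pp)) (a + b)"
  using keys_mult[of P Q] by (force simp: LB_def LBs_def wdot_add intro: add_less_le_mono)
lemma LBs_mult2: "LB \<omega> P a \<Longrightarrow> LBs \<omega> Q b \<Longrightarrow> LBs \<omega> (P * (Q::('n::finite,'k::comm_semiring_0) pp)) (a + b)"
  using keys_mult[of P Q] by (force simp: LB_def LBs_def wdot_add intro: add_le_less_mono)
lemma UB_mult: "UB \<omega> P a \<Longrightarrow> UB \<omega> Q b \<Longrightarrow> UB \<omega> (P * (Q::('n::finite,'k::comm_semiring_0) pp)) (a + b)"
  using keys_mult[of P Q] by (force simp: UB_def wdot_add intro: add_mono)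

lemma LB_one: "LB \<omega> (1::('n::finite,'k::comm_semiring_1) pp) 0"
  by (simp add: LB_def) 
lemma UB_one: "UB \<omega> (1::('n::finite,'k::comm_semiring_1) pp) 0"
  by (simp add: UB_def) 

lemma LB_sum: "(\<And>i. i \<in> A \<Longrightarrow> LB \<omega> (F i) b) \<Longrightarrow> LB \<omega> (sum F A) b"
  by (induction A rule: infinite_finite_induct) (auto intro: LB_add)
lemma LBs_sum: "(\<And>i. i \<in> A \<Longrightarrow> LBs \<omega> (F i) b) \<Longrightarrow> LBs \<omega> (sum F A) b"
  by (induction A rule: infinite_finite_induct) (auto intro: LBs_add)
lemma UB_sum: "(\<And>i. i \<in> A \<Longrightarrow> UB \<omega> (F i) b) \<Longrightarrow> UB \<omega> (sum F A) b"
  by (induction A rule: infinite_finite_induct) (auto intro: UB_add)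

lemma LB_prod: "(\<And>i. i \<in> A \<Longrightarrow> LB \<omega> (F i) (b i)) \<Longrightarrow> LB \<omega> (prod F A :: ('n::finite,'k::comm_semiring_1) pp) (sum b A)"
  by (induction A rule: infinite_finite_induct) (auto intro: LB_mult simp: LB_one)
lemma UB_prod: "(\<And>i. i \<in> A \<Longrightarrow> UB \<omega> (F i) (b i)) \<Longrightarrow> UB \<omega> (prod F A :: ('n::finite,'k::comm_semiring_1) pp) (sum b A)"
  by (induction A rule: infinite_finite_induct) (auto intro: UB_mult simp: UB_one)
lemma LB_power: "LB \<omega> P b \<Longrightarrow> LB \<omega> (P ^ n :: ('n::finite,'k::comm_semiring_1) pp) (of_nat n * b)"
  by (induction n) (auto simp: LB_one distrib_right dest: LB_mult)
lemma UB_power: "UB \<omega> P b \<Longrightarrow> UB \<omega> (P ^ n :: ('n::finite,'k::comm_semiring_1) pp) (of_nat n * b)"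
  by (induction n) (auto simp: UB_one distrib_right dest: UB_mult)

definition near :: "('n::finite \<Rightarrow> real) \<Rightarrow> ('n,'k::comm_ring_1) pp \<Rightarrow> ('n,'k) pp \<Rightarrow> real \<Rightarrow> bool" where
  "near \<omega> P Q b \<longleftrightarrow> LB \<omega> P b \<and> LB \<omega> Q b \<and> LBs \<omega> (P - Q) b"

lemma near_refl: "LB \<omega> P b \<Longrightarrow> near \<omega> P P b"
  by (simp add: near_def)

lemma near_mult: "near \<omega> a a' s \<Longrightarrow> near \<omega> b b' t \<Longrightarrow> near \<omega> (a * b) (a' * b') (s + t)"
proof -
  assume A: "near \<omega> a a' s" and B: "near \<omega> b b' t"
  have e: "a * b - a' * b' = (a - a') * b + a' * (b - b')" by (simp add: algebra_simps)
  from A B have "LBs \<omega> ((a - a') * b) (s + t)" unfolding near_def by (intro LBs_mult1) auto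
  moreover from A B have "LBs \<omega> (a' * (b - b')) (s + t)" unfolding near_def by (intro LBs_mult2) auto
  ultimately show ?thesis using A B unfolding near_def e
    by (auto intro: LB_mult LBs_add)
qed

lemma near_one: "near \<omega> 1 1 0"
  by (simp add: near_refl LB_one)

lemma near_prod: "(\<And>i. i \<in> A \<Longrightarrow> near \<omega> (F i) (G i) (b i)) \<Longrightarrow> near \<omega> (prod F A) (prod G A) (sum b A)"
  by (induction A rule: infinite_finite_induct) (auto intro: near_mult simp: near_one)

lemma near_power: "near \<omega> P Q b \<Longrightarrow> near \<omega> (P ^ n) (Q ^ n) (of_nat n * b)"
  by (induction n) (auto simp: near_one distrib_right dest: near_mult)

definition xm :: "('n \<Rightarrow> int) \<Rightarrow> ('n,'k::comm_ring_1) pp" where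
  "xm a = Poly_Mapping.single (\<lambda>i. of_int (a i)) 1"

definition tm :: "('m::finite \<Rightarrow> ('n,'k::comm_ring_1) pp) \<Rightarrow> ('n,'m) lexp \<Rightarrow> ('n,'k) pp" where
  "tm u p = xm (fst p) * (\<Prod>j\<in>UNIV. u j ^ snd p j)"

definition ev :: "('m::finite \<Rightarrow> ('n,'k::comm_ring_1) pp) \<Rightarrow> ('n,'m,'k) lpoly \<Rightarrow> ('n,'k) pp" where
  "ev u f = lext (Poly_Mapping.single 0) (tm u) f"

lemma xm_add: "xm (a + b) = xm a * (xm b :: ('n,'k::comm_ring_1) pp)"
  by (simp add: xm_def mult_single plus_fun_def)

lemma xm_zero: "xm 0 = 1"
proof -
  have "(\<lambda>i. of_int ((0::'a\<Rightarrow>int) i)::rat) = 0" by (simp add: fun_eq_iff)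
  then show ?thesis by (simp add: xm_def)
qed

lemma tm_add: "tm u (p + q) = tm u p * tm u q"
  by (simp add: tm_def xm_add power_add prod.distrib mult_ac)

lemma tm_zero: "tm u 0 = 1"
  by (simp add: tm_def xm_zero)

interpretation ev: lhom "Poly_Mapping.single 0" "tm u"
  by unfold_locales (auto simp: single_add mult_single tm_add tm_zero)



lemma ev_add: "ev u (f + g) = ev u f + ev u g" by (simp add: ev_def ev.lext_add)
lemma ev_diff: "ev u (f - g) = ev u f - ev u g" by (simp add: ev_def ev.lext_diff)
lemma ev_mult: "ev u (f * g) = ev u f * ev u g" by (simp add: ev_def ev.lext_mult)
lemma ev_zero[simp]: "ev u 0 = 0" by (simp add: ev_def ev.lext_zero)
lemma ev_one[simp]: "ev u 1 = 1" by (simp add: ev_def ev.lext_one)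
lemma ev_sum: "ev u (sum F A) = (\<Sum>i\<in>A. ev u (F i))" by (simp add: ev_def ev.lext_sum)
lemma ev_prod: "ev u (prod F A) = (\<Prod>i\<in>A. ev u (F i))" by (simp add: ev_def ev.lext_prod)
lemma ev_power: "ev u (f ^ n) = ev u f ^ n" by (simp add: ev_def ev.lext_power)
lemma ev_mono: "ev u (mono c a b) = Poly_Mapping.single 0 c * tm u (a, b)"
  by (simp add: ev_def mono_def ev.lext_single)

lemma ev_yvar: "ev u (yvar j) = u j"
proof -
  have "(\<Prod>i\<in>UNIV. u i ^ (if i = j then 1 else 0)) = (\<Prod>i\<in>UNIV. if i = j then u i else 1)"
    by (rule prod.cong) auto
  also have "\<dots> = u j" by (simp add: prod.delta)
  finally show ?thesis by (simp add: yvar_def ev_mono tm_def xm_zero)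
qed

lemma ev_expand: "ev u f = (\<Sum>p\<in>Poly_Mapping.keys f. Poly_Mapping.single 0 (Poly_Mapping.lookup f p) * tm u p)"
  by (simp add: ev_def lext_def)

lemma finite_lower_bound: "finite S \<Longrightarrow> \<exists>c::real. \<forall>x\<in>S. c \<le> F x"
  by (rule exI[of _ "Min (insert 0 (F ` S))"]) auto

lemma LB_xm: "LB \<omega> (xm a) (wdot \<omega> (\<lambda>i. of_int (a i)))"
  by (simp add: xm_def LB_single)

lemma LB_tm: "(\<And>j. LB \<omega> (u j) \<mu>) \<Longrightarrow>
   LB \<omega> (tm u p) (wdot \<omega> (\<lambda>i. of_int (fst p i)) + (\<Sum>j\<in>UNIV. of_nat (snd p j) * \<mu>))"
  unfolding tm_def by (intro LB_mult LB_xm LB_prod LB_power)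

lemma LB_single0_mult: "LB \<omega> (P::('n::finite,'k::comm_ring_1) pp) b \<Longrightarrow> LB \<omega> (Poly_Mapping.single 0 c * P) b"
  using LB_mult[of \<omega> "Poly_Mapping.single 0 c" 0 P b] by (simp add: LB_single)
lemma LBs_single0_mult: "LBs \<omega> (P::('n::finite,'k::comm_ring_1) pp) b \<Longrightarrow> LBs \<omega> (Poly_Mapping.single 0 c * P) b"
  using LBs_mult2[of \<omega> "Poly_Mapping.single 0 c" 0 P b] by (simp add: LB_single)
lemma UB_single0_mult: "UB \<omega> (P::('n::finite,'k::comm_ring_1) pp) b \<Longrightarrow> UB \<omega> (Poly_Mapping.single 0 c * P) b"
  using UB_mult[of \<omega> "Poly_Mapping.single 0 c" 0 P b] by (simp add: UB_single)

lemma ev_LB_ex: fixes f :: "('n::finite,'m::finite,'k::comm_ring_1) lpoly"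
  shows "\<exists>c. \<forall>u. (\<forall>j. LB \<omega> (u j) \<mu>) \<longrightarrow> LB \<omega> (ev u f) c"
proof -
  obtain c where c: "\<forall>p\<in>Poly_Mapping.keys f. c \<le> wdot \<omega> (\<lambda>i. of_int (fst p i)) + (\<Sum>j\<in>UNIV. of_nat (snd p j) * \<mu>)"
    using finite_lower_bound[of "Poly_Mapping.keys f" "\<lambda>p. wdot \<omega> (\<lambda>i. of_int (fst p i)) + (\<Sum>j\<in>UNIV. of_nat (snd p j) * \<mu>)"] by auto
  show ?thesis
  proof (intro exI allI impI)
    fix u :: "'m \<Rightarrow> ('n,'k) pp" assume u: "\<forall>j. LB \<omega> (u j) \<mu>"
    show "LB \<omega> (ev u f) c" unfolding ev_expand
      by (intro LB_sum LB_single0_mult LB_mono[OF LB_tm]) (use u c in auto)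
  qed
qed

lemma lookup_single0_mult: "Poly_Mapping.lookup (Poly_Mapping.single 0 c * P) \<gamma> = c * Poly_Mapping.lookup P \<gamma>"
  by (simp add: mult_map_scale_conv_mult[symmetric] map.rep_eq when_def)

lemma lookup_single_mult: "Poly_Mapping.lookup (Poly_Mapping.single a c * P) \<gamma> = c * Poly_Mapping.lookup P (\<gamma> - (a::'a::ab_group_add))"
proof -
  have "Poly_Mapping.lookup (Poly_Mapping.single a c * P) \<gamma> =
      (\<Sum>l. (c when a = l) * (\<Sum>q. Poly_Mapping.lookup P q when \<gamma> = l + q))"
    by (simp add: lookup_mult lookup_single)
  also have "\<dots> = (\<Sum>l. (c * (\<Sum>q. Poly_Mapping.lookup P q when \<gamma> = l + q)) when a = l)"
    by (simp add: when_mult)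
  also have "\<dots> = c * (\<Sum>q. Poly_Mapping.lookup P q when \<gamma> = a + q)"
    by simp
  also have "(\<lambda>q. \<gamma> = a + q) = (\<lambda>q. q = \<gamma> - a)" by (auto simp: fun_eq_iff algebra_simps)
  then have "(\<Sum>q. Poly_Mapping.lookup P q when \<gamma> = a + q) = Poly_Mapping.lookup P (\<gamma> - a)"
    by (metis Sum_any_when_equal)
  finally show ?thesis by simp
qed




definition approx :: "('n::finite \<Rightarrow> real) \<Rightarrow> ('m \<Rightarrow> ('n,'k::comm_ring_1) series) \<Rightarrow> real \<Rightarrow> real \<Rightarrow> ('m \<Rightarrow> ('n,'k) pp) \<Rightarrow> bool" where
  "approx \<omega> \<psi> \<mu> W u \<longleftrightarrow> (\<forall>j \<gamma>. wdot \<omega> \<gamma> < W \<longrightarrow> Poly_Mapping.lookup (u j) \<gamma> = \<psi> j \<gamma>) \<and>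
      (\<forall>j. LB \<omega> (u j) \<mu>) \<and> (\<forall>j \<gamma>. \<psi> j \<gamma> \<noteq> 0 \<longrightarrow> \<mu> \<le> wdot \<omega> \<gamma>)"

definition Good :: "('n::finite \<Rightarrow> real) \<Rightarrow> ('m::finite \<Rightarrow> ('n,'k::comm_ring_1) series) \<Rightarrow> ('n,'m,'k) lpoly \<Rightarrow> bool" where
  "Good \<omega> \<psi> g \<longleftrightarrow> (\<forall>\<mu>. \<exists>c. \<forall>W u. approx \<omega> \<psi> \<mu> W u \<longrightarrow> LB \<omega> (ev u g) (W + c))"

lemma Good_ideal: "is_ideal {g. Good \<omega> \<psi> g}"
proof -
  have Z: "Good \<omega> \<psi> 0" by (auto simp: Good_def)
  have A: "Good \<omega> \<psi> (f + g)" if f: "Good \<omega> \<psi> f" and g: "Good \<omega> \<psi> g" for f g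
    unfolding Good_def
  proof
    fix \<mu>
    obtain c1 where c1: "\<forall>W u. approx \<omega> \<psi> \<mu> W u \<longrightarrow> LB \<omega> (ev u f) (W + c1)" using f unfolding Good_def by blast
    obtain c2 where c2: "\<forall>W u. approx \<omega> \<psi> \<mu> W u \<longrightarrow> LB \<omega> (ev u g) (W + c2)" using g unfolding Good_def by blast
    show "\<exists>c. \<forall>W u. approx \<omega> \<psi> \<mu> W u \<longrightarrow> LB \<omega> (ev u (f + g)) (W + c)"
    proof (rule exI[of _ "min c1 c2"], intro allI impI)
      fix W u assume a: "approx \<omega> \<psi> \<mu> W u"
      have "LB \<omega> (ev u f) (W + c1)" using c1 a by blast
      then have F: "LB \<omega> (ev u f) (W + min c1 c2)" by (rule LB_mono) simp
      have "LB \<omega> (ev u g) (W + c2)" using c2 a by blast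
      then have G: "LB \<omega> (ev u g) (W + min c1 c2)" by (rule LB_mono) simp
      from F G show "LB \<omega> (ev u (f + g)) (W + min c1 c2)" by (simp add: ev_add LB_add)
    qed
  qed
  have M: "Good \<omega> \<psi> (r * f)" if f: "Good \<omega> \<psi> f" for r f
    unfolding Good_def
  proof
    fix \<mu>
    obtain c1 where c1: "\<forall>W u. approx \<omega> \<psi> \<mu> W u \<longrightarrow> LB \<omega> (ev u f) (W + c1)" using f unfolding Good_def by blast
    obtain c2 where c2: "\<forall>u. (\<forall>j. LB \<omega> (u j) \<mu>) \<longrightarrow> LB \<omega> (ev u r) c2" using ev_LB_ex[of \<omega> \<mu> r] by blast
    show "\<exists>c. \<forall>W u. approx \<omega> \<psi> \<mu> W u \<longrightarrow> LB \<omega> (ev u (r * f)) (W + c)"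
    proof (rule exI[of _ "c1 + c2"], intro allI impI)
      fix W u assume a: "approx \<omega> \<psi> \<mu> W u"
      then have "LB \<omega> (ev u r * ev u f) (c2 + (W + c1))"
        using c1 c2 by (intro LB_mult) (auto simp: approx_def)
      then show "LB \<omega> (ev u (r * f)) (W + (c1 + c2))" by (simp add: ev_mult add_ac)
    qed
  qed
  show ?thesis unfolding is_ideal_def using Z A M by auto
qed

lemma ideal_gen_sub: "is_ideal K \<Longrightarrow> S \<subseteq> K \<Longrightarrow> ideal_gen S \<subseteq> K"
  by (auto simp: ideal_gen_def)

lemma ideal_gen_is_ideal: "is_ideal (ideal_gen S)"
  unfolding ideal_gen_def is_ideal_def by auto

lemma ideal_gen_sup: "S \<subseteq> ideal_gen S"
  unfolding ideal_gen_def by auto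

definition sc :: "nat \<Rightarrow> ('n,'k::comm_ring_1) pp \<Rightarrow> ('n,'k) pp" where
  "sc k P = lext (Poly_Mapping.single 0) (\<lambda>\<gamma>. Poly_Mapping.single (\<lambda>i. of_nat k * \<gamma> i) 1) P"

lemma sc_chi_add: "Poly_Mapping.single (\<lambda>i. of_nat k * (a + b) i) (1::'b::comm_ring_1) =
        Poly_Mapping.single (\<lambda>i. of_nat k * a i) 1 * Poly_Mapping.single (\<lambda>i. of_nat k * (b::'a\<Rightarrow>rat) i) 1"
  by (simp add: mult_single plus_fun_def distrib_left)

lemma sc_chi_zero: "Poly_Mapping.single (\<lambda>i. of_nat k * (0::'a\<Rightarrow>rat) i) (1::'b::comm_ring_1) = 1"
proof -
  have "(\<lambda>i. of_nat k * (0::'a\<Rightarrow>rat) i) = 0" by (simp add: fun_eq_iff)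
  then show ?thesis by simp
qed

interpretation sc: lhom "Poly_Mapping.single 0" "\<lambda>\<gamma>::'a\<Rightarrow>rat. Poly_Mapping.single (\<lambda>i. of_nat k * \<gamma> i) (1::'b::comm_ring_1)"
  by (unfold_locales; (rule sc_chi_add sc_chi_zero)?; simp add: single_add mult_single)

lemma sc_add: "sc k (f + g) = sc k f + sc k g" by (simp add: sc_def sc.lext_add)
lemma sc_diff: "sc k (f - g) = sc k f - sc k g" by (simp add: sc_def sc.lext_diff)
lemma sc_mult: "sc k (f * g) = sc k f * sc k g" by (simp add: sc_def sc.lext_mult)
lemma sc_sum: "sc k (sum F A) = (\<Sum>i\<in>A. sc k (F i))" by (simp add: sc_def sc.lext_sum)
lemma sc_prod: "sc k (prod F A) = (\<Prod>i\<in>A. sc k (F i))" by (simp add: sc_def sc.lext_prod)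
lemma sc_power: "sc k (f ^ n) = sc k f ^ n" by (simp add: sc_def sc.lext_power)
lemma sc_single: "sc k (Poly_Mapping.single a c) = Poly_Mapping.single (\<lambda>i. of_nat k * a i) c"
  by (simp add: sc_def sc.lext_single mult_single)

lemma lookup_sc:
  assumes "k > 0"
  shows "Poly_Mapping.lookup (sc k P) \<gamma> = Poly_Mapping.lookup P (\<lambda>i. \<gamma> i / of_nat k)"
proof -
  have "sc k P = (\<Sum>p\<in>Poly_Mapping.keys P. Poly_Mapping.single (\<lambda>i. of_nat k * p i) (Poly_Mapping.lookup P p))"
    by (simp add: sc_def lext_def mult_single)
  then have "Poly_Mapping.lookup (sc k P) \<gamma> = (\<Sum>p\<in>Poly_Mapping.keys P. if (\<lambda>i. of_nat k * p i) = \<gamma> then Poly_Mapping.lookup P p else 0)"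
    by (simp add: lookup_sum lookup_single when_def)
  also have "\<dots> = (\<Sum>p\<in>Poly_Mapping.keys P. if p = (\<lambda>i. \<gamma> i / of_nat k) then Poly_Mapping.lookup P p else 0)"
  proof (rule sum.cong[OF refl])
    fix p
    have "((\<lambda>i. of_nat k * p i) = \<gamma>) = (p = (\<lambda>i. \<gamma> i / of_nat k))"
      using assms by (auto simp: fun_eq_iff field_simps)
    then show "(if (\<lambda>i. of_nat k * p i) = \<gamma> then Poly_Mapping.lookup P p else 0) = (if p = (\<lambda>i. \<gamma> i / of_nat k) then Poly_Mapping.lookup P p else 0)"
      by simp
  qed
  also have "\<dots> = Poly_Mapping.lookup P (\<lambda>i. \<gamma> i / of_nat k)"
    by (simp add: in_keys_iff)
  finally show ?thesis .
qed

lemma wdot_div: "wdot \<omega> (\<lambda>i. \<gamma> i / of_nat k) = wdot \<omega> \<gamma> / of_nat k"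
  using wdot_scale[of \<omega> "1 / of_nat k" \<gamma>] by (simp add: field_simps of_rat_divide)

lemma wdot_mulk: "wdot \<omega> (\<lambda>i. of_nat k * \<gamma> i) = of_nat k * wdot \<omega> \<gamma>"
  using wdot_scale[of \<omega> "of_nat k" \<gamma>] by simp

lemma LB_sc:
  assumes "k > 0" "LB \<omega> P b"
  shows "LB \<omega> (sc k P) (of_nat k * b)"
  unfolding LB_def
proof
  fix \<gamma> assume "\<gamma> \<in> Poly_Mapping.keys (sc k P)"
  then have "(\<lambda>i. \<gamma> i / of_nat k) \<in> Poly_Mapping.keys P" using assms(1) by (simp add: in_keys_iff lookup_sc)
  then have "b \<le> wdot \<omega> \<gamma> / of_nat k" using assms(2) by (auto simp: LB_def wdot_div)
  then show "of_nat k * b \<le> wdot \<omega> \<gamma>" using assms(1) by (simp add: field_simps)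
qed




lemma dG_ex: "\<exists>k::nat. k > 0 \<and> (\<forall>i j q. (\<Gamma>::'m::finite \<Rightarrow> 'n::finite \<Rightarrow> rat option) i j = Some q \<longrightarrow> of_nat k * q \<in> \<int>)"
proof -
  have fin: "finite (\<Union>i j. set_option (\<Gamma> i j))" by simp
  have "\<exists>k::nat. k > 0 \<and> (\<forall>q\<in>Q. of_nat k * q \<in> \<int>)" if "finite Q" for Q :: "rat set"
    using that
  proof (induction Q rule: finite_induct)
    case empty then show ?case by (intro exI[of _ 1]) auto
  next
    case (insert q Q)
    then obtain k0 where k0: "k0 > 0" "\<forall>q\<in>Q. of_nat k0 * q \<in> \<int>" by blast
    obtain n d where nd: "quotient_of q = (n, d)" by (cases "quotient_of q")
    have d: "d > 0" using quotient_of_denom_pos[OF nd] .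
    have q: "q = of_int n / of_int d" using quotient_of_div[OF nd] .
    have dq: "of_int d * q = of_int n" using d q by simp
    show ?case
    proof (intro exI[of _ "k0 * nat d"] conjI ballI)
      show "k0 * nat d > 0" using k0 d by simp
      fix q' assume "q' \<in> insert q Q"
      then show "of_nat (k0 * nat d) * q' \<in> \<int>"
      proof
        assume "q' = q"
        have "of_nat (k0 * nat d) * q' = of_nat k0 * (of_int d * q)" using d \<open>q' = q\<close> by simp
        also have "\<dots> = of_int (int k0 * n)" using dq by simp
        finally show ?thesis by (metis Ints_of_int)
      next
        assume "q' \<in> Q"
        then have "of_nat k0 * q' \<in> \<int>" using k0 by blast
        then have "of_int d * (of_nat k0 * q') \<in> \<int>" by (metis Ints_mult Ints_of_int)
        moreover have "of_nat (k0 * nat d) * q' = of_int d * (of_nat k0 * q')" using d by simp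
        ultimately show ?thesis by metis
      qed
    qed
  qed
  from this[OF fin] obtain k where "k > 0" "\<forall>q\<in>(\<Union>i j. set_option (\<Gamma> i j)). of_nat k * q \<in> \<int>" by blast
  then show ?thesis by (intro exI[of _ k]) force
qed

lemma dG_props: "dG \<Gamma> > 0 \<and> (\<forall>i j q. (\<Gamma>::'m::finite \<Rightarrow> 'n::finite \<Rightarrow> rat option) i j = Some q \<longrightarrow> of_nat (dG \<Gamma>) * q \<in> \<int>)"
  unfolding dG_def by (rule LeastI_ex[OF dG_ex])

lemma of_int_floor_Ints: "x \<in> \<int> \<Longrightarrow> of_int \<lfloor>x\<rfloor> = (x::rat)"
  by (metis Ints_cases floor_of_int)

lemma sc_zero[simp]: "sc k 0 = 0" by (simp add: sc_def lext_def)

lemma sc_single0: "sc k (Poly_Mapping.single 0 a) = Poly_Mapping.single 0 a"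
proof -
  have "(\<lambda>i. of_nat k * (0::'a\<Rightarrow>rat) i) = 0" by (simp add: fun_eq_iff)
  then show ?thesis by (simp add: sc_single)
qed

lemma sc_xm: "sc k (xm a) = xm (\<lambda>i. int k * a i)"
  by (simp add: xm_def sc_single)

lemma tm_snd0: "tm u (a, 0) = xm a"
  by (simp add: tm_def)

lemma ev_subst:
  fixes f :: "('n::finite,'m::finite,'k::comm_ring_1) lpoly"
  assumes kdef: "k = dG \<Gamma>"
    and H: "\<forall>j. \<Gamma> j = (\<lambda>_. None) \<or> (\<forall>i. \<Gamma> j i \<noteq> None)"
    and uv: "\<forall>j. u j = sc k (v j) - sc k (if \<Gamma> j = (\<lambda>_. None) then 0 else Poly_Mapping.single (\<lambda>i. the (\<Gamma> j i)) (c j))"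
  shows "ev u (subst_D (\<eta>, \<Gamma>, c) f) = sc k (ev v f)"
proof -
  define M where "M j = (if \<Gamma> j = (\<lambda>_. None) then 0 else Poly_Mapping.single (\<lambda>i. the (\<Gamma> j i)) (c j))" for j :: 'm
  define Sh :: "'m \<Rightarrow> ('n,'m,'k) lpoly" where "Sh j = (if \<Gamma> j = (\<lambda>_. None) then 0 else mono (c j) (\<lambda>i. \<lfloor>of_nat k * the (\<Gamma> j i)\<rfloor>) 0)" for j :: 'm
  have kint: "\<forall>i j q. \<Gamma> i j = Some q \<longrightarrow> of_nat k * q \<in> \<int>" using dG_props[of \<Gamma>] kdef by simp
  have evSh: "ev u (Sh j) = sc k (M j)" for j
  proof (cases "\<Gamma> j = (\<lambda>_. None)")
    case True then show ?thesis by (simp add: Sh_def M_def)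
  next
    case False
    then have all: "\<forall>i. \<Gamma> j i \<noteq> None" using H by blast
    have "(\<lambda>i. rat_of_int \<lfloor>of_nat k * the (\<Gamma> j i)\<rfloor>) = (\<lambda>i. of_nat k * the (\<Gamma> j i))"
    proof
      fix i
      from all obtain q where "\<Gamma> j i = Some q" by blast
      then show "rat_of_int \<lfloor>of_nat k * the (\<Gamma> j i)\<rfloor> = of_nat k * the (\<Gamma> j i)"
        using kint of_int_floor_Ints by auto
    qed
    then show ?thesis using False
      by (simp add: Sh_def M_def ev_mono tm_snd0 xm_def mult_single sc_single)
  qed
  have uM: "u j + ev u (Sh j) = sc k (v j)" for j
    using uv evSh by (simp add: M_def)
  have "ev u (subst_D (\<eta>, \<Gamma>, c) f) = (\<Sum>p\<in>Poly_Mapping.keys f.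
      Poly_Mapping.single 0 (Poly_Mapping.lookup f p) * xm (\<lambda>i. int k * fst p i) *
      (\<Prod>j\<in>UNIV. (u j + ev u (Sh j)) ^ snd p j))"
    unfolding subst_D_def Let_def
    by (simp add: ev_sum ev_mult ev_prod ev_power ev_add ev_yvar ev_mono tm_snd0 Sh_def kdef cong: if_cong)
  also have "\<dots> = (\<Sum>p\<in>Poly_Mapping.keys f.
      Poly_Mapping.single 0 (Poly_Mapping.lookup f p) * xm (\<lambda>i. int k * fst p i) *
      (\<Prod>j\<in>UNIV. sc k (v j) ^ snd p j))"
    by (simp add: uM)
  also have "\<dots> = sc k (ev v f)"
    by (simp add: ev_expand sc_sum sc_mult sc_prod sc_power sc_single0 sc_xm tm_def mult.assoc)
  finally show ?thesis .
qed




lemma def_data_H: "def_data \<omega> \<psi> = (\<eta>, \<Gamma>, c) \<Longrightarrow> \<forall>j. \<Gamma> j = (\<lambda>_. None) \<or> (\<forall>i. \<Gamma> j i \<noteq> None)"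
  unfolding def_data_def by auto

lemma series_step_eq: "series_step (\<eta>, \<Gamma>, c) \<psi> = (\<lambda>j \<gamma>. \<psi> j (\<lambda>i. \<gamma> i / of_nat (dG \<Gamma>)) -
        (if \<Gamma> j \<noteq> (\<lambda>_. None) \<and> \<gamma> = (\<lambda>i. of_nat (dG \<Gamma>) * the (\<Gamma> j i)) then c j else 0))"
  by (simp add: series_step_def Let_def)

lemma transport:
  fixes \<psi> :: "'m::finite \<Rightarrow> ('n::finite,'k::comm_ring_1) series"
  assumes G: "Good \<omega> \<psi> f" and D: "def_data \<omega> \<psi> = (\<eta>, \<Gamma>, c)"
  shows "Good \<omega> (series_step (\<eta>, \<Gamma>, c) \<psi>) (subst_D (\<eta>, \<Gamma>, c) f)"
  unfolding Good_def
proof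
  fix \<mu>
  define k where "k = dG \<Gamma>"
  have kpos: "k > 0" using dG_props[of \<Gamma>] k_def by simp
  have H: "\<forall>j. \<Gamma> j = (\<lambda>_. None) \<or> (\<forall>i. \<Gamma> j i \<noteq> None)" using def_data_H[OF D] .
  define \<psi>' where "\<psi>' = series_step (\<eta>, \<Gamma>, c) \<psi>"
  have \<psi>'_eq: "\<psi>' j \<gamma> = \<psi> j (\<lambda>i. \<gamma> i / of_nat k) -
        (if \<Gamma> j \<noteq> (\<lambda>_. None) \<and> \<gamma> = (\<lambda>i. of_nat k * the (\<Gamma> j i)) then c j else 0)" for j \<gamma>
    by (simp add: \<psi>'_def series_step_eq k_def)
  define F where "F j = (if \<Gamma> j = (\<lambda>_. None) then \<mu> / of_nat k else wdot \<omega> (\<lambda>i. the (\<Gamma> j i)))" for j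
  obtain m where m: "\<forall>j\<in>UNIV. m \<le> F j" using finite_lower_bound[of "UNIV::'m set" F] by auto
  define \<mu>' where "\<mu>' = min m (\<mu> / of_nat k)"
  obtain c' where c': "\<forall>W v. approx \<omega> \<psi> \<mu>' W v \<longrightarrow> LB \<omega> (ev v f) (W + c')"
    using G unfolding Good_def by blast
  show "\<exists>c0. \<forall>W u. approx \<omega> (series_step (\<eta>, \<Gamma>, c) \<psi>) \<mu> W u \<longrightarrow> LB \<omega> (ev u (subst_D (\<eta>, \<Gamma>, c) f)) (W + c0)"
  proof (rule exI[of _ "of_nat k * c'"], intro allI impI)
    fix W u assume a: "approx \<omega> (series_step (\<eta>, \<Gamma>, c) \<psi>) \<mu> W u"
    then have a1: "\<forall>j \<gamma>. wdot \<omega> \<gamma> < W \<longrightarrow> Poly_Mapping.lookup (u j) \<gamma> = \<psi>' j \<gamma>"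
      and a2: "\<forall>j. LB \<omega> (u j) \<mu>" and a3: "\<forall>j \<gamma>. \<psi>' j \<gamma> \<noteq> 0 \<longrightarrow> \<mu> \<le> wdot \<omega> \<gamma>"
      unfolding approx_def \<psi>'_def by auto
    define sk where "sk = (\<lambda>(\<gamma>::'n\<Rightarrow>rat) i. of_nat k * \<gamma> i)"
    have inj: "inj sk" using kpos by (auto simp: inj_def sk_def fun_eq_iff)
    have wsk: "wdot \<omega> (sk \<gamma>) = of_nat k * wdot \<omega> \<gamma>" for \<gamma> by (simp add: sk_def wdot_mulk)
    have skmul: "sk (\<lambda>i. \<gamma> i / of_nat k) = \<gamma>" for \<gamma> using kpos by (simp add: sk_def fun_eq_iff)
    have skdiv: "(\<lambda>i. sk \<gamma> i / of_nat k) = \<gamma>" for \<gamma> using kpos by (simp add: sk_def fun_eq_iff)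
    define M :: "'m \<Rightarrow> ('n,'k) pp" where "M j = (if \<Gamma> j = (\<lambda>_. None) then 0 else Poly_Mapping.single (\<lambda>i. the (\<Gamma> j i)) (c j))" for j
    define v where "v j = Poly_Mapping.map_key sk (u j) + M j" for j
    have lv: "Poly_Mapping.lookup (v j) \<gamma> = Poly_Mapping.lookup (u j) (sk \<gamma>) + Poly_Mapping.lookup (M j) \<gamma>" for j \<gamma>
      by (simp add: v_def lookup_add map_key.rep_eq[OF inj])
    have skeq: "(sk \<gamma> = (\<lambda>i. of_nat k * the (\<Gamma> j i))) = (\<gamma> = (\<lambda>i. the (\<Gamma> j i)))" for \<gamma> j
      using kpos by (auto simp: sk_def fun_eq_iff)
    have ap: "approx \<omega> \<psi> \<mu>' (W / of_nat k) v"
      unfolding approx_def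
    proof (intro conjI allI impI)
      fix j \<gamma> assume "wdot \<omega> \<gamma> < W / of_nat k"
      then have "wdot \<omega> (sk \<gamma>) < W" using kpos by (simp add: wsk field_simps)
      then have "Poly_Mapping.lookup (u j) (sk \<gamma>) = \<psi>' j (sk \<gamma>)" using a1 by blast
      then show "Poly_Mapping.lookup (v j) \<gamma> = \<psi> j \<gamma>"
        by (simp add: lv \<psi>'_eq skdiv skeq M_def lookup_single when_def)
    next
      fix j
      have "LB \<omega> (Poly_Mapping.map_key sk (u j)) \<mu>'"
        unfolding LB_def
      proof
        fix \<gamma> assume "\<gamma> \<in> Poly_Mapping.keys (Poly_Mapping.map_key sk (u j))"
        then have "sk \<gamma> \<in> Poly_Mapping.keys (u j)" by (simp add: keys_map_key[OF inj])
        then have "\<mu> \<le> of_nat k * wdot \<omega> \<gamma>" using a2 unfolding LB_def by (metis wsk)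
        then have "\<mu> / of_nat k \<le> wdot \<omega> \<gamma>" using kpos by (simp add: field_simps)
        then show "\<mu>' \<le> wdot \<omega> \<gamma>" by (simp add: \<mu>'_def)
      qed
      moreover have "LB \<omega> (M j) \<mu>'"
        using m by (auto simp: M_def F_def \<mu>'_def intro!: LB_single split: if_splits)
      ultimately show "LB \<omega> (v j) \<mu>'" by (simp add: v_def LB_add)
    next
      fix j \<gamma> assume nz: "\<psi> j \<gamma> \<noteq> 0"
      show "\<mu>' \<le> wdot \<omega> \<gamma>"
      proof (cases "\<Gamma> j \<noteq> (\<lambda>_. None) \<and> \<gamma> = (\<lambda>i. the (\<Gamma> j i))")
        case True
        then have "m \<le> wdot \<omega> \<gamma>" using m[rule_format, of j] by (simp add: F_def)
        then show ?thesis by (simp add: \<mu>'_def)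
      next
        case False
        then have "\<psi>' j (sk \<gamma>) = \<psi> j \<gamma>" by (auto simp: \<psi>'_eq skdiv skeq)
        then have "\<mu> \<le> of_nat k * wdot \<omega> \<gamma>" using a3 nz by (metis wsk)
        then have "\<mu> / of_nat k \<le> wdot \<omega> \<gamma>" using kpos by (simp add: field_simps)
        then show ?thesis by (simp add: \<mu>'_def)
      qed
    qed
    have LBv: "LB \<omega> (ev v f) (W / of_nat k + c')" using c' ap by blast
    have uv: "\<forall>j. u j = sc k (v j) - sc k (M j)"
    proof
      fix j
      have "sc k (Poly_Mapping.map_key sk (u j)) = u j"
        by (rule poly_mapping_eqI) (simp add: lookup_sc[OF kpos] map_key.rep_eq[OF inj] skmul)
      then show "u j = sc k (v j) - sc k (M j)" by (simp add: v_def sc_add)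
    qed
    have "ev u (subst_D (\<eta>, \<Gamma>, c) f) = sc k (ev v f)"
      by (rule ev_subst[OF k_def H]) (use uv in \<open>simp add: M_def\<close>)
    moreover have "LB \<omega> (sc k (ev v f)) (of_nat k * (W / of_nat k + c'))"
      by (rule LB_sc[OF kpos LBv])
    ultimately show "LB \<omega> (ev u (subst_D (\<eta>, \<Gamma>, c) f)) (W + of_nat k * c')"
      using kpos by (simp add: distrib_left)
  qed
qed




definition ExS :: "'t set \<Rightarrow> ('t \<Rightarrow> ('a::ab_group_add \<Rightarrow>\<^sub>0 'b::comm_ring_1)) \<Rightarrow> 'a \<Rightarrow> ('t \<Rightarrow> 'a) set" where
  "ExS T F \<delta> = {e. (\<forall>t. t \<notin> T \<longrightarrow> e t = 0) \<and> (\<forall>t\<in>T. Poly_Mapping.lookup (F t) (e t) \<noteq> 0) \<and> (\<Sum>t\<in>T. e t) = \<delta>}"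

lemma finite_ExS:
  assumes "finite T" shows "finite (ExS T F \<delta>)"
proof -
  have "ExS T F \<delta> \<subseteq> (\<lambda>e t. if t \<in> T then e t else 0) ` (Pi\<^sub>E T (\<lambda>t. Poly_Mapping.keys (F t)))"
  proof
    fix e assume e: "e \<in> ExS T F \<delta>"
    have "e = (\<lambda>t. if t \<in> T then restrict e T t else 0)" using e by (auto simp: ExS_def fun_eq_iff)
    moreover have "restrict e T \<in> Pi\<^sub>E T (\<lambda>t. Poly_Mapping.keys (F t))" using e by (auto simp: ExS_def in_keys_iff)
    ultimately show "e \<in> (\<lambda>e t. if t \<in> T then e t else 0) ` (Pi\<^sub>E T (\<lambda>t. Poly_Mapping.keys (F t)))" by blast
  qed
  moreover have "finite (Pi\<^sub>E T (\<lambda>t. Poly_Mapping.keys (F t)))" using assms by (intro finite_PiE) auto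
  ultimately show ?thesis by (meson finite_imageI finite_subset)
qed

lemma lookup_mult_keys:
  fixes B :: "'a::ab_group_add \<Rightarrow>\<^sub>0 'b::comm_ring_1"
  shows "Poly_Mapping.lookup (A * B) \<delta> = (\<Sum>a\<in>Poly_Mapping.keys A. Poly_Mapping.lookup A a * Poly_Mapping.lookup B (\<delta> - (a::'a::ab_group_add)))"
proof -
  have "A * B = (\<Sum>a\<in>Poly_Mapping.keys A. Poly_Mapping.single a (Poly_Mapping.lookup A a) * B)"
    by (subst (1) pm_expand[of A]) (simp add: sum_distrib_right)
  then show ?thesis by (simp add: lookup_sum lookup_single_mult)
qed

lemma lookup_prod_expand:
  fixes F :: "'t \<Rightarrow> ('a::ab_group_add \<Rightarrow>\<^sub>0 'b::comm_ring_1)"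
  assumes "finite T"
  shows "Poly_Mapping.lookup (\<Prod>t\<in>T. F t) \<delta> = (\<Sum>e\<in>ExS T F \<delta>. \<Prod>t\<in>T. Poly_Mapping.lookup (F t) (e t))"
  using assms
proof (induction T arbitrary: \<delta> rule: finite_induct)
  case empty
  have "ExS {} F \<delta> = (if \<delta> = 0 then {\<lambda>_. 0} else {})" by (auto simp: ExS_def fun_eq_iff)
  then show ?case by (simp add: lookup_one)
next
  case (insert s T)
  let ?S = "Sigma (Poly_Mapping.keys (F s)) (\<lambda>a. ExS T F (\<delta> - a))"
  have "Poly_Mapping.lookup (\<Prod>t\<in>insert s T. F t) \<delta> =
      (\<Sum>a\<in>Poly_Mapping.keys (F s). Poly_Mapping.lookup (F s) a * Poly_Mapping.lookup (\<Prod>t\<in>T. F t) (\<delta> - a))"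
    using insert by (simp add: lookup_mult_keys)
  also have "\<dots> = (\<Sum>a\<in>Poly_Mapping.keys (F s). \<Sum>e\<in>ExS T F (\<delta> - a).
        Poly_Mapping.lookup (F s) a * (\<Prod>t\<in>T. Poly_Mapping.lookup (F t) (e t)))"
    by (simp add: insert.IH sum_distrib_left)
  also have "\<dots> = (\<Sum>(a, e)\<in>?S. Poly_Mapping.lookup (F s) a * (\<Prod>t\<in>T. Poly_Mapping.lookup (F t) (e t)))"
    by (rule sum.Sigma) (auto intro: finite_ExS insert.hyps)
  also have "\<dots> = (\<Sum>e\<in>ExS (insert s T) F \<delta>. \<Prod>t\<in>insert s T. Poly_Mapping.lookup (F t) (e t))"
  proof (rule sum.reindex_bij_witness[where j = "\<lambda>(a, e). e(s := a)" and i = "\<lambda>e. (e s, e(s := 0))"])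
    fix x assume x: "x \<in> ?S"
    obtain a e where xe: "x = (a, e)" by (cases x)
    have es: "e s = 0" using x xe insert.hyps by (auto simp: ExS_def)
    show "(\<lambda>e. (e s, e(s := 0))) ((\<lambda>(a, e). e(s := a)) x) = x" using xe es by (auto simp: fun_eq_iff)
    have sT: "(\<Sum>t\<in>T. (e(s := a)) t) = (\<Sum>t\<in>T. e t)" using insert.hyps by (intro sum.cong) auto
    show "(\<lambda>(a, e). e(s := a)) x \<in> ExS (insert s T) F \<delta>"
      using x xe insert.hyps sT by (auto simp: ExS_def in_keys_iff)
    have pT: "(\<Prod>t\<in>T. Poly_Mapping.lookup (F t) ((e(s := a)) t)) = (\<Prod>t\<in>T. Poly_Mapping.lookup (F t) (e t))"
      using insert.hyps by (intro prod.cong) auto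
    show "(\<Prod>t\<in>insert s T. Poly_Mapping.lookup (F t) (((\<lambda>(a, e). e(s := a)) x) t)) =
          (case x of (a, e) \<Rightarrow> Poly_Mapping.lookup (F s) a * (\<Prod>t\<in>T. Poly_Mapping.lookup (F t) (e t)))"
      using xe insert.hyps pT by simp
  next
    fix y assume y: "y \<in> ExS (insert s T) F \<delta>"
    show "(\<lambda>(a, e). e(s := a)) ((\<lambda>e. (e s, e(s := 0))) y) = y" by auto
    have sT: "(\<Sum>t\<in>T. (y(s := 0)) t) = (\<Sum>t\<in>T. y t)" using insert.hyps by (intro sum.cong) auto
    have "(\<Sum>t\<in>T. y t) = \<delta> - y s" using y insert.hyps by (auto simp: ExS_def algebra_simps)
    then show "(\<lambda>e. (e s, e(s := 0))) y \<in> ?S"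
      using y insert.hyps sT by (auto simp: ExS_def in_keys_iff)
  qed
  finally show ?case .
qed




definition Tb :: "('m::finite \<Rightarrow> nat) \<Rightarrow> ('m \<times> nat) set" where
  "Tb \<beta> = Sigma UNIV (\<lambda>j. {..<\<beta> j})"

lemma finite_Tb[simp]: "finite (Tb \<beta>)" by (simp add: Tb_def)

lemma mem_Tb: "t \<in> Tb \<beta> \<longleftrightarrow> snd t < \<beta> (fst t)"
  by (cases t) (simp add: Tb_def)

definition Ec :: "('m::finite \<Rightarrow> 'a \<Rightarrow> 'b::zero) \<Rightarrow> ('m \<Rightarrow> nat) \<Rightarrow> 'a::comm_monoid_add \<Rightarrow> ('m \<Rightarrow> nat \<Rightarrow> 'a) set" where
  "Ec G \<beta> \<delta> = {e. (\<forall>j l. \<beta> j \<le> l \<longrightarrow> e j l = 0) \<and> (\<forall>j l. l < \<beta> j \<longrightarrow> G j (e j l) \<noteq> 0) \<and>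
        (\<Sum>j\<in>UNIV. \<Sum>l<\<beta> j. e j l) = \<delta>}"

lemma ppc_Ec: "pow_prod_coeff \<psi> \<beta> \<delta> = (\<Sum>e\<in>Ec \<psi> \<beta> \<delta>. \<Prod>j\<in>UNIV. \<Prod>l<\<beta> j. \<psi> j (e j l))"
  by (simp add: pow_prod_coeff_def Ec_def)

lemma sum_Tb: "(\<Sum>j\<in>UNIV. \<Sum>l<\<beta> j. g j l) = (\<Sum>t\<in>Tb \<beta>. g (fst t) (snd t))"
  unfolding Tb_def by (subst sum.Sigma) (auto simp: case_prod_beta)

lemma prod_Tb: "(\<Prod>j\<in>UNIV. \<Prod>l<\<beta> j. g j l) = (\<Prod>t\<in>Tb \<beta>. g (fst t) (snd t))"
  unfolding Tb_def by (subst prod.Sigma) (auto simp: case_prod_beta)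

lemma prod_pow_Tb: "(\<Prod>j\<in>UNIV. (u j :: 'b::comm_monoid_mult) ^ \<beta> j) = (\<Prod>t\<in>Tb \<beta>. u (fst t))"
proof -
  have "(\<Prod>j\<in>UNIV. u j ^ \<beta> j) = (\<Prod>j\<in>UNIV. \<Prod>l<\<beta> j. u j)" by simp
  also have "\<dots> = (\<Prod>t\<in>Tb \<beta>. u (fst t))" by (rule prod_Tb)
  finally show ?thesis .
qed

lemma lookup_prod_pow:
  fixes u :: "'m::finite \<Rightarrow> ('a::ab_group_add \<Rightarrow>\<^sub>0 'b::comm_ring_1)"
  shows "Poly_Mapping.lookup (\<Prod>j\<in>UNIV. u j ^ \<beta> j) \<delta> =
     (\<Sum>e\<in>Ec (\<lambda>j. Poly_Mapping.lookup (u j)) \<beta> \<delta>. \<Prod>j\<in>UNIV. \<Prod>l<\<beta> j. Poly_Mapping.lookup (u j) (e j l))"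
proof -
  have "Poly_Mapping.lookup (\<Prod>j\<in>UNIV. u j ^ \<beta> j) \<delta> = Poly_Mapping.lookup (\<Prod>t\<in>Tb \<beta>. u (fst t)) \<delta>"
    by (simp add: prod_pow_Tb)
  also have "\<dots> = (\<Sum>e\<in>ExS (Tb \<beta>) (\<lambda>t. u (fst t)) \<delta>. \<Prod>t\<in>Tb \<beta>. Poly_Mapping.lookup (u (fst t)) (e t))"
    by (rule lookup_prod_expand) simp
  also have "\<dots> = (\<Sum>e\<in>Ec (\<lambda>j. Poly_Mapping.lookup (u j)) \<beta> \<delta>. \<Prod>j\<in>UNIV. \<Prod>l<\<beta> j. Poly_Mapping.lookup (u j) (e j l))"
  proof (rule sum.reindex_bij_witness[where j = "\<lambda>e j l. e (j, l)" and i = "\<lambda>e t. e (fst t) (snd t)"])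
    fix e assume e: "e \<in> ExS (Tb \<beta>) (\<lambda>t. u (fst t)) \<delta>"
    show "(\<lambda>t. (\<lambda>j l. e (j, l)) (fst t) (snd t)) = e" by simp
    have e1: "\<forall>t. t \<notin> Tb \<beta> \<longrightarrow> e t = 0" and e2: "\<forall>t\<in>Tb \<beta>. Poly_Mapping.lookup (u (fst t)) (e t) \<noteq> 0"
      and e3: "(\<Sum>t\<in>Tb \<beta>. e t) = \<delta>" using e by (auto simp: ExS_def)
    have "Poly_Mapping.lookup (u j) (e (j, l)) \<noteq> 0" if "l < \<beta> j" for j l
      using e2[rule_format, of "(j, l)"] that by (simp add: mem_Tb)
    moreover have "e (j, l) = 0" if "\<beta> j \<le> l" for j l
      using e1[rule_format, of "(j, l)"] that by (simp add: mem_Tb)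
    moreover have "(\<Sum>j\<in>UNIV. \<Sum>l<\<beta> j. e (j, l)) = \<delta>"
      using e3 by (simp add: sum_Tb[of "\<lambda>j l. e (j, l)"])
    ultimately show "(\<lambda>j l. e (j, l)) \<in> Ec (\<lambda>j. Poly_Mapping.lookup (u j)) \<beta> \<delta>"
      by (auto simp: Ec_def)
    show "(\<Prod>j\<in>UNIV. \<Prod>l<\<beta> j. Poly_Mapping.lookup (u j) ((\<lambda>j l. e (j, l)) j l)) =
       (\<Prod>t\<in>Tb \<beta>. Poly_Mapping.lookup (u (fst t)) (e t))"
      by (simp add: prod_Tb[of "\<lambda>j l. Poly_Mapping.lookup (u j) (e (j, l))"])
  next
    fix e assume e: "e \<in> Ec (\<lambda>j. Poly_Mapping.lookup (u j)) \<beta> \<delta>"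
    show "(\<lambda>j l. (\<lambda>t. e (fst t) (snd t)) (j, l)) = e" by simp
    show "(\<lambda>t. e (fst t) (snd t)) \<in> ExS (Tb \<beta>) (\<lambda>t. u (fst t)) \<delta>"
      using e by (auto simp: ExS_def Ec_def mem_Tb sum_Tb[of e, symmetric])
  qed
  finally show ?thesis .
qed

lemma small_components:
  assumes zero: "\<forall>j l. \<beta> j \<le> l \<longrightarrow> e j l = 0"
    and sumd: "(\<Sum>j\<in>UNIV. \<Sum>l<\<beta> j. e j l) = \<delta>"
    and lb: "\<forall>j l. l < \<beta> j \<longrightarrow> \<mu> \<le> wdot \<omega> (e j l)"
    and wd: "wdot \<omega> \<delta> < W + (real (card (Tb \<beta>)) - 1) * \<mu>"
    and l: "l < \<beta> j"
  shows "wdot \<omega> (e j l) < W"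
proof -
  let ?T = "Tb \<beta>"
  have t0: "(j, l) \<in> ?T" using l by (simp add: Tb_def)
  have eq1: "wdot \<omega> \<delta> = (\<Sum>t\<in>?T. wdot \<omega> (e (fst t) (snd t)))"
    using sumd[symmetric] by (simp add: wdot_sum sum_Tb)
  have eq2: "(\<Sum>t\<in>?T. wdot \<omega> (e (fst t) (snd t))) = wdot \<omega> (e j l) + (\<Sum>t\<in>?T - {(j, l)}. wdot \<omega> (e (fst t) (snd t)))"
    using t0 by (simp add: sum.remove)
  have "(\<Sum>t\<in>?T - {(j, l)}. wdot \<omega> (e (fst t) (snd t))) \<ge> of_nat (card (?T - {(j, l)})) * \<mu>"
    by (rule sum_bounded_below) (use lb in \<open>auto simp: Tb_def\<close>)
  moreover have "card ?T \<ge> 1" using t0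
    by (metis One_nat_def Suc_leI card_gt_0_iff empty_iff finite_Tb)
  then have "of_nat (card (?T - {(j, l)})) = real (card ?T) - 1"
    using t0 by (simp add: card_Diff_singleton of_nat_diff)
  ultimately have "(real (card ?T) - 1) * \<mu> \<le> (\<Sum>t\<in>?T - {(j, l)}. wdot \<omega> (e (fst t) (snd t)))"
    by simp
  then have "wdot \<omega> \<delta> \<ge> wdot \<omega> (e j l) + (real (card ?T) - 1) * \<mu>"
    using eq1 eq2 by linarith
  then show ?thesis using wd by linarith
qed

lemma coeff_agree:
  assumes ap: "approx \<omega> \<psi> \<mu> W u"
    and wd: "wdot \<omega> \<delta> < W + (real (card (Tb \<beta>)) - 1) * \<mu>"
  shows "Poly_Mapping.lookup (\<Prod>j\<in>UNIV. u j ^ \<beta> j) \<delta> = pow_prod_coeff \<psi> \<beta> \<delta>"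
proof -
  from ap have a1: "\<forall>j \<gamma>. wdot \<omega> \<gamma> < W \<longrightarrow> Poly_Mapping.lookup (u j) \<gamma> = \<psi> j \<gamma>"
    and a2: "\<forall>j. LB \<omega> (u j) \<mu>" and a3: "\<forall>j \<gamma>. \<psi> j \<gamma> \<noteq> 0 \<longrightarrow> \<mu> \<le> wdot \<omega> \<gamma>"
    by (auto simp: approx_def)
  have a2': "Poly_Mapping.lookup (u j) \<gamma> \<noteq> 0 \<Longrightarrow> \<mu> \<le> wdot \<omega> \<gamma>" for j \<gamma>
    using a2 by (auto simp: LB_def in_keys_iff)
  have small: "wdot \<omega> (e j l) < W"
    if "e \<in> Ec (\<lambda>j. Poly_Mapping.lookup (u j)) \<beta> \<delta> \<or> e \<in> Ec \<psi> \<beta> \<delta>" "l < \<beta> j" for e j l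
  proof (rule small_components[OF _ _ _ wd that(2)])
    show "\<forall>j l. \<beta> j \<le> l \<longrightarrow> e j l = 0" using that(1) by (auto simp: Ec_def)
    show "(\<Sum>j\<in>UNIV. \<Sum>l<\<beta> j. e j l) = \<delta>" using that(1) by (auto simp: Ec_def)
    show "\<forall>j l. l < \<beta> j \<longrightarrow> \<mu> \<le> wdot \<omega> (e j l)"
    proof (intro allI impI)
      fix j l assume "l < \<beta> j"
      then show "\<mu> \<le> wdot \<omega> (e j l)" using that(1) a2' a3 unfolding Ec_def by blast
    qed
  qed
  have eqE: "Ec (\<lambda>j. Poly_Mapping.lookup (u j)) \<beta> \<delta> = Ec \<psi> \<beta> \<delta>"
  proof (intro set_eqI iffI)
    fix e assume e: "e \<in> Ec (\<lambda>j. Poly_Mapping.lookup (u j)) \<beta> \<delta>"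
    then show "e \<in> Ec \<psi> \<beta> \<delta>" using small[of e] a1 by (auto simp: Ec_def)
  next
    fix e assume e: "e \<in> Ec \<psi> \<beta> \<delta>"
    then show "e \<in> Ec (\<lambda>j. Poly_Mapping.lookup (u j)) \<beta> \<delta>" using small[of e] a1 by (auto simp: Ec_def)
  qed
  show ?thesis
    unfolding lookup_prod_pow ppc_Ec eqE
    by (intro sum.cong refl prod.cong) (use small a1 in auto)
qed

lemma lookup_ev: "Poly_Mapping.lookup (ev u f) \<gamma> =
   (\<Sum>p\<in>Poly_Mapping.keys f. Poly_Mapping.lookup f p *
       Poly_Mapping.lookup (\<Prod>j\<in>UNIV. u j ^ snd p j) (\<gamma> - (\<lambda>i. of_int (fst p i))))"
  by (simp add: ev_expand lookup_sum lookup_single0_mult tm_def xm_def lookup_single_mult)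

lemma base_good:
  fixes f :: "('n::finite,'m::finite,'k::comm_ring_1) lpoly"
  assumes ev0: "eval_series f \<psi> = (\<lambda>_. 0)"
  shows "Good \<omega> \<psi> f"
  unfolding Good_def
proof
  fix \<mu>
  obtain c where c: "\<forall>p\<in>Poly_Mapping.keys f. c \<le> wdot \<omega> (\<lambda>i. of_int (fst p i)) + (real (card (Tb (snd p))) - 1) * \<mu>"
    using finite_lower_bound[of "Poly_Mapping.keys f" "\<lambda>p. wdot \<omega> (\<lambda>i. of_int (fst p i)) + (real (card (Tb (snd p))) - 1) * \<mu>"] by auto
  show "\<exists>c. \<forall>W u. approx \<omega> \<psi> \<mu> W u \<longrightarrow> LB \<omega> (ev u f) (W + c)"
  proof (rule exI[of _ c], intro allI impI)
    fix W u assume ap: "approx \<omega> \<psi> \<mu> W u"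
    show "LB \<omega> (ev u f) (W + c)" unfolding LB_def
    proof (rule ballI, rule ccontr)
      fix \<gamma> assume g: "\<gamma> \<in> Poly_Mapping.keys (ev u f)" and "\<not> W + c \<le> wdot \<omega> \<gamma>"
      then have lt: "wdot \<omega> \<gamma> < W + c" by simp
      have "Poly_Mapping.lookup (ev u f) \<gamma> = (\<Sum>p\<in>Poly_Mapping.keys f. Poly_Mapping.lookup f p *
          pow_prod_coeff \<psi> (snd p) (\<gamma> - (\<lambda>i. of_int (fst p i))))"
        unfolding lookup_ev
      proof (intro sum.cong refl arg_cong2[where f = "(*)"] coeff_agree[OF ap])
        fix p assume "p \<in> Poly_Mapping.keys f"
        then have "c \<le> wdot \<omega> (\<lambda>i. of_int (fst p i)) + (real (card (Tb (snd p))) - 1) * \<mu>" using c by blast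
        then show "wdot \<omega> (\<gamma> - (\<lambda>i. of_int (fst p i))) < W + (real (card (Tb (snd p))) - 1) * \<mu>"
          using lt by (simp add: wdot_diff)
      qed
      also have "\<dots> = eval_series f \<psi> \<gamma>" by (simp add: eval_series_def)
      also have "\<dots> = 0" using ev0 by simp
      finally show False using g by (simp add: in_keys_iff)
    qed
  qed
qed




definition FinBelow :: "('n::finite \<Rightarrow> real) \<Rightarrow> ('m \<Rightarrow> ('n,'k::zero) series) \<Rightarrow> bool" where
  "FinBelow \<omega> \<psi> \<longleftrightarrow> (\<forall>j B. finite {a. \<psi> j a \<noteq> 0 \<and> wdot \<omega> a \<le> B})"

lemma wdot_inj:
  assumes Q: "Q_lin_indep \<omega>" and eq: "wdot \<omega> a = wdot \<omega> b"
  shows "a = b"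
proof -
  have "(\<Sum>i\<in>UNIV. of_rat ((a - b) i) * \<omega> i) = wdot \<omega> a - wdot \<omega> b"
    by (simp add: wdot_def of_rat_diff right_diff_distrib sum_subtractf mult.commute)
  then have "(\<Sum>i\<in>UNIV. of_rat ((a - b) i) * \<omega> i) = 0" using eq by simp
  then have "\<forall>i. (a - b) i = 0" using Q unfolding Q_lin_indep_def by blast
  then show ?thesis by (simp add: fun_eq_iff)
qed

lemma ser_min:
  assumes fin: "finite {a. s a \<noteq> 0 \<and> wdot \<omega> a \<le> wdot \<omega> a0}" and nz: "s a0 \<noteq> (0::'k::zero)"
  shows "\<exists>a. s a \<noteq> 0 \<and> (\<forall>b. s b \<noteq> 0 \<longrightarrow> wdot \<omega> a \<le> wdot \<omega> b)"
proof -
  let ?S = "{a. s a \<noteq> 0 \<and> wdot \<omega> a \<le> wdot \<omega> a0}"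
  have ne: "?S \<noteq> {}" using nz by auto
  have "Min (wdot \<omega> ` ?S) \<in> wdot \<omega> ` ?S" by (rule Min_in) (use fin ne in auto)
  then obtain a where a: "a \<in> ?S" "wdot \<omega> a = Min (wdot \<omega> ` ?S)" by auto
  show ?thesis
  proof (intro exI[of _ a] conjI allI impI)
    show "s a \<noteq> 0" using a by auto
    fix b assume "s b \<noteq> 0"
    show "wdot \<omega> a \<le> wdot \<omega> b"
    proof (cases "wdot \<omega> b \<le> wdot \<omega> a0")
      case True then show ?thesis using a fin \<open>s b \<noteq> 0\<close> by (auto intro: Min_le)
    next
      case False then show ?thesis using a by auto
    qed
  qed
qed

lemma dd_struct:
  fixes \<psi> :: "'m \<Rightarrow> ('n::finite,'k::zero) series"
  assumes FB: "FinBelow \<omega> \<psi>" and Q: "Q_lin_indep \<omega>" and D: "def_data \<omega> \<psi> = (\<eta>, \<Gamma>, c)"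
  shows "((\<forall>a. \<psi> j a = 0) \<and> \<eta> j = \<infinity> \<and> \<Gamma> j = (\<lambda>_. None) \<and> c j = 0) \<or>
    (\<exists>a. \<psi> j a \<noteq> 0 \<and> (\<forall>b. \<psi> j b \<noteq> 0 \<longrightarrow> b \<noteq> a \<longrightarrow> wdot \<omega> a < wdot \<omega> b) \<and>
         \<eta> j = ereal (wdot \<omega> a) \<and> \<Gamma> j = (\<lambda>i. Some (a i)) \<and> c j = \<psi> j a)"
proof -
  have \<eta>: "\<eta> j = ord_s \<omega> (\<psi> j)" and \<Gamma>: "\<Gamma> j = (if supp (in_s \<omega> (\<psi> j)) = {} then (\<lambda>_. None)
          else (\<lambda>i. Some ((THE a. a \<in> supp (in_s \<omega> (\<psi> j))) i)))"
    and c: "c j = (if supp (in_s \<omega> (\<psi> j)) = {} then 0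
          else in_s \<omega> (\<psi> j) (THE a. a \<in> supp (in_s \<omega> (\<psi> j))))"
    using D[symmetric] unfolding def_data_def by (simp_all only: prod.inject)
  show ?thesis
  proof (cases "\<forall>a. \<psi> j a = 0")
    case True
    then have "supp (\<psi> j) = {}" by (simp add: supp_def)
    then have o: "ord_s \<omega> (\<psi> j) = \<infinity>" by (simp add: ord_s_def top_ereal_def)
    then have "supp (in_s \<omega> (\<psi> j)) = {}" by (simp add: supp_def in_s_def)
    then show ?thesis using True o \<eta> \<Gamma> c by simp
  next
    case False
    then obtain a0 where a0: "\<psi> j a0 \<noteq> 0" by blast
    obtain a where a: "\<psi> j a \<noteq> 0" "\<forall>b. \<psi> j b \<noteq> 0 \<longrightarrow> wdot \<omega> a \<le> wdot \<omega> b"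
      using ser_min[of "\<psi> j" \<omega> a0] FB a0 unfolding FinBelow_def by blast
    have strict: "\<forall>b. \<psi> j b \<noteq> 0 \<longrightarrow> b \<noteq> a \<longrightarrow> wdot \<omega> a < wdot \<omega> b"
      using a wdot_inj[OF Q] by (metis order_le_less)
    have o: "ord_s \<omega> (\<psi> j) = ereal (wdot \<omega> a)"
      unfolding ord_s_def
      by (rule Inf_eqI) (use a in \<open>auto simp: supp_def\<close>)
    have s: "supp (in_s \<omega> (\<psi> j)) = {a}"
      using a(1) wdot_inj[OF Q, of _ a] by (auto simp: supp_def in_s_def o)
    have ia: "in_s \<omega> (\<psi> j) a = \<psi> j a" by (simp add: in_s_def o)
    show ?thesis using a strict o s ia \<eta> \<Gamma> c by auto
  qed
qed

lemma FinBelow_step: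
  assumes FB: "FinBelow \<omega> \<psi>" and kpos: "dG \<Gamma> > 0"
  shows "FinBelow \<omega> (series_step (\<eta>, \<Gamma>, c) \<psi>)"
  unfolding FinBelow_def
proof (intro allI)
  fix j B
  define k where "k = dG \<Gamma>"
  define sk where "sk = (\<lambda>(\<gamma>::'a\<Rightarrow>rat) i. of_nat k * \<gamma> i)"
  have "{a. series_step (\<eta>, \<Gamma>, c) \<psi> j a \<noteq> 0 \<and> wdot \<omega> a \<le> B} \<subseteq>
      sk ` {\<gamma>. \<psi> j \<gamma> \<noteq> 0 \<and> wdot \<omega> \<gamma> \<le> B / of_nat k} \<union> {\<lambda>i. of_nat k * the (\<Gamma> j i)}"
  proof
    fix a assume a: "a \<in> {a. series_step (\<eta>, \<Gamma>, c) \<psi> j a \<noteq> 0 \<and> wdot \<omega> a \<le> B}"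
    show "a \<in> sk ` {\<gamma>. \<psi> j \<gamma> \<noteq> 0 \<and> wdot \<omega> \<gamma> \<le> B / of_nat k} \<union> {\<lambda>i. of_nat k * the (\<Gamma> j i)}"
    proof (cases "a = (\<lambda>i. of_nat k * the (\<Gamma> j i))")
      case False
      then have nz: "\<psi> j (\<lambda>i. a i / of_nat k) \<noteq> 0" using a by (auto simp: series_step_eq k_def)
      have "wdot \<omega> (\<lambda>i. a i / of_nat k) \<le> B / of_nat k" using a kpos
        by (simp add: wdot_div k_def divide_right_mono)
      moreover have "a = sk (\<lambda>i. a i / of_nat k)" using kpos by (simp add: sk_def k_def fun_eq_iff)
      ultimately show ?thesis using nz by blast
    qed simp
  qed
  moreover have "finite {\<gamma>. \<psi> j \<gamma> \<noteq> 0 \<and> wdot \<omega> \<gamma> \<le> B / of_nat k}" using FB by (simp add: FinBelow_def)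
  ultimately show "finite {a. series_step (\<eta>, \<Gamma>, c) \<psi> j a \<noteq> 0 \<and> wdot \<omega> a \<le> B}"
    by (meson finite_Un finite_imageI finite.intros rev_finite_subset)
qed

lemma ineq_step:
  fixes \<psi> :: "'m::finite \<Rightarrow> ('n::finite,'k::comm_ring_1) series"
  assumes FB: "FinBelow \<omega> \<psi>" and Q: "Q_lin_indep \<omega>" and D: "def_data \<omega> \<psi> = (\<eta>, \<Gamma>, c)"
    and FB': "FinBelow \<omega> (series_step (\<eta>, \<Gamma>, c) \<psi>)"
    and D': "def_data \<omega> (series_step (\<eta>, \<Gamma>, c) \<psi>) = (\<eta>', \<Gamma>', c')"
    and j: "j \<in> Lam \<eta>'"
  shows "\<eta>' j > ereal (of_nat (dG \<Gamma>)) * \<eta> j"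
proof -
  define k where "k = dG \<Gamma>"
  have kpos: "k > 0" using dG_props[of \<Gamma>] by (simp add: k_def)
  define \<psi>' where "\<psi>' = series_step (\<eta>, \<Gamma>, c) \<psi>"
  have \<psi>'_eq: "\<psi>' j \<gamma> = \<psi> j (\<lambda>i. \<gamma> i / of_nat k) -
        (if \<Gamma> j \<noteq> (\<lambda>_. None) \<and> \<gamma> = (\<lambda>i. of_nat k * the (\<Gamma> j i)) then c j else 0)" for j \<gamma>
    by (simp add: \<psi>'_def series_step_eq k_def)
  from dd_struct[OF FB' Q D', of j] j obtain a' where
    a': "\<psi>' j a' \<noteq> 0" "\<eta>' j = ereal (wdot \<omega> a')" by (auto simp: Lam_def \<psi>'_def)
  from dd_struct[OF FB Q D, of j] show ?thesis
  proof
    assume A: "(\<forall>a. \<psi> j a = 0) \<and> \<eta> j = \<infinity> \<and> \<Gamma> j = (\<lambda>_. None) \<and> c j = 0"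
    then have "\<psi>' j a' = 0" by (simp add: \<psi>'_eq)
    then show ?thesis using a' by simp
  next
    assume "\<exists>a. \<psi> j a \<noteq> 0 \<and> (\<forall>b. \<psi> j b \<noteq> 0 \<longrightarrow> b \<noteq> a \<longrightarrow> wdot \<omega> a < wdot \<omega> b) \<and>
         \<eta> j = ereal (wdot \<omega> a) \<and> \<Gamma> j = (\<lambda>i. Some (a i)) \<and> c j = \<psi> j a"
    then obtain a where a: "\<psi> j a \<noteq> 0" "\<forall>b. \<psi> j b \<noteq> 0 \<longrightarrow> b \<noteq> a \<longrightarrow> wdot \<omega> a < wdot \<omega> b"
      "\<eta> j = ereal (wdot \<omega> a)" "\<Gamma> j = (\<lambda>i. Some (a i))" "c j = \<psi> j a" by blast
    have Gne: "\<Gamma> j \<noteq> (\<lambda>_. None)" using a(4) by (auto simp: fun_eq_iff)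
    have ne: "a' \<noteq> (\<lambda>i. of_nat k * a i)"
    proof
      assume "a' = (\<lambda>i. of_nat k * a i)"
      then have "\<psi>' j a' = 0" using kpos Gne a(4,5) by (simp add: \<psi>'_eq)
      then show False using a'(1) by simp
    qed
    then have "\<psi> j (\<lambda>i. a' i / of_nat k) \<noteq> 0" using a'(1) Gne a(4) by (auto simp: \<psi>'_eq)
    moreover have "(\<lambda>i. a' i / of_nat k) \<noteq> a" using ne kpos by (auto simp: fun_eq_iff field_simps)
    ultimately have "wdot \<omega> a < wdot \<omega> a' / of_nat k" using a(2) by (auto simp: wdot_div)
    then have "of_nat k * wdot \<omega> a < wdot \<omega> a'" using kpos by (simp add: field_simps)
    then show ?thesis using a'(2) a(3) by (simp add: k_def)
  qed
qed




lemma finite_int_box: "finite {z :: 'n::finite \<Rightarrow> int. \<forall>i. z i \<in> {-N..N}}"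
proof -
  have "{z :: 'n \<Rightarrow> int. \<forall>i. z i \<in> {-N..N}} = Pi\<^sub>E UNIV (\<lambda>_. {-N..N})"
    by (simp add: PiE_UNIV_domain Pi_def)
  then show ?thesis by (simp add: finite_PiE)
qed

lemma finbelow_op:
  fixes s :: "('n::finite,'k::zero) series"
  assumes Q: "Q_lin_indep \<omega>" and op: "omega_positive \<omega> s"
  shows "finite {a. s a \<noteq> 0 \<and> wdot \<omega> a \<le> B}"
proof -
  from op obtain k :: nat where k: "k > 0" "\<forall>a\<in>supp s. \<forall>i. of_nat k * a i \<in> \<int>"
    unfolding omega_positive_def by blast
  from op obtain \<gamma> V where V: "finite V" and cp: "\<forall>v\<in>rat_cone V. 0 \<le> (\<Sum>i\<in>UNIV. v i * \<omega> i)"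
    and mem: "\<forall>a\<in>supp s. (\<lambda>i. of_rat (a i + \<gamma> i)) \<in> rat_cone V"
    unfolding omega_positive_def by blast
  define pv where "pv u = (\<Sum>i\<in>UNIV. of_rat (u i) * \<omega> i)" for u :: "'n \<Rightarrow> rat"
  have pv_nn: "pv u \<ge> 0" if u: "u \<in> V" for u
  proof -
    have e: "(\<Sum>v\<in>V. (if v = u then 1 else 0) * real_of_rat (v i)) = real_of_rat (u i)" for i
    proof -
      have "(\<Sum>v\<in>V. (if v = u then 1 else 0) * real_of_rat (v i)) = (\<Sum>v\<in>V. if v = u then real_of_rat (v i) else 0)"
        by (rule sum.cong) auto
      also have "\<dots> = real_of_rat (u i)" using V u by simp
      finally show ?thesis .
    qed
    have "(\<lambda>i. of_rat (u i)) \<in> rat_cone V"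
      unfolding rat_cone_def
      by (rule CollectI, rule exI[of _ "\<lambda>v. if v = u then 1 else 0"]) (simp add: e)
    then show ?thesis using cp by (simp add: pv_def)
  qed
  have pv_pos: "pv u > 0" if u: "u \<in> V" "u \<noteq> 0" for u
  proof -
    have "pv u \<noteq> 0"
    proof
      assume "pv u = 0"
      then have "\<forall>i. u i = 0" using Q unfolding Q_lin_indep_def pv_def by blast
      then show False using u(2) by (simp add: fun_eq_iff)
    qed
    then show ?thesis using pv_nn[OF u(1)] by simp
  qed
  define \<delta> where "\<delta> = Min (insert 1 (pv ` (V - {0})))"
  have \<delta>pos: "\<delta> > 0" unfolding \<delta>_def using V pv_pos by (subst Min_gr_iff) auto
  have \<delta>le: "\<delta> \<le> pv u" if "u \<in> V" "u \<noteq> 0" for u unfolding \<delta>_def using V that by (intro Min_le) auto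
  define B' where "B' = B + wdot \<omega> \<gamma>"
  define L where "L = \<bar>B'\<bar> / \<delta>"
  define R where "R = (\<Sum>i\<in>UNIV. L * (\<Sum>u\<in>V. \<bar>of_rat (u i)\<bar>) + \<bar>of_rat (\<gamma> i)\<bar>)"
  have bound: "\<bar>of_rat (a i)\<bar> \<le> R" if a: "s a \<noteq> 0" "wdot \<omega> a \<le> B" for a i
  proof -
    from mem a obtain l where l: "\<forall>u\<in>V. l u \<ge> (0::real)" and
      eq: "(\<lambda>i. of_rat (a i + \<gamma> i)) = (\<lambda>i. \<Sum>u\<in>V. l u * of_rat (u i))"
      by (auto simp: supp_def rat_cone_def)
    have "(\<Sum>u\<in>V. l u * pv u) = (\<Sum>i\<in>UNIV. (\<Sum>u\<in>V. l u * of_rat (u i)) * \<omega> i)"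
      by (simp add: pv_def sum_distrib_left sum_distrib_right sum.swap[of _ V] mult.assoc)
    also have "\<dots> = (\<Sum>i\<in>UNIV. of_rat (a i + \<gamma> i) * \<omega> i)"
      using eq by (metis (no_types, lifting))
    also have "\<dots> = wdot \<omega> a + wdot \<omega> \<gamma>"
      by (simp add: wdot_def of_rat_add distrib_left sum.distrib mult.commute)
    finally have S: "(\<Sum>u\<in>V. l u * pv u) \<le> B'" using a(2) by (simp add: B'_def)
    have lL: "l u \<le> L" if "u \<in> V" "u \<noteq> 0" for u
    proof -
      have "l u * pv u \<le> (\<Sum>u\<in>V. l u * pv u)"
        using V that l pv_nn by (intro member_le_sum) auto
      moreover have "l u * \<delta> \<le> l u * pv u" using l that \<delta>le by (simp add: mult_left_mono)
      ultimately have "l u * \<delta> \<le> \<bar>B'\<bar>" using S by linarith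
      then show ?thesis using \<delta>pos by (simp add: L_def field_simps)
    qed
    have "\<bar>of_rat (a i + \<gamma> i)\<bar> = \<bar>\<Sum>u\<in>V. l u * of_rat (u i)\<bar>" using eq by (metis (no_types, lifting))
    also have "\<dots> \<le> (\<Sum>u\<in>V. \<bar>l u * of_rat (u i)\<bar>)" by (rule sum_abs)
    also have "\<dots> \<le> (\<Sum>u\<in>V. L * \<bar>of_rat (u i)\<bar>)"
    proof (rule sum_mono)
      fix u assume u: "u \<in> V"
      show "\<bar>l u * of_rat (u i)\<bar> \<le> L * \<bar>of_rat (u i)\<bar>"
      proof (cases "u = 0")
        case True then show ?thesis by simp
      next
        case False then show ?thesis using lL[OF u False] l u by (simp add: abs_mult mult_right_mono)
      qed
    qed
    finally have "\<bar>of_rat (a i + \<gamma> i)\<bar> \<le> L * (\<Sum>u\<in>V. \<bar>of_rat (u i)\<bar>)" by (simp add: sum_distrib_left)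
    then have "\<bar>of_rat (a i)\<bar> \<le> L * (\<Sum>u\<in>V. \<bar>of_rat (u i)\<bar>) + \<bar>of_rat (\<gamma> i)\<bar>"
      unfolding of_rat_add by arith
    also have "\<dots> \<le> R" unfolding R_def
      using \<delta>pos by (intro member_le_sum) (auto simp: L_def zero_le_of_rat_iff intro!: add_nonneg_nonneg mult_nonneg_nonneg sum_nonneg divide_nonneg_pos)
    finally show ?thesis .
  qed
  define N where "N = \<lceil>of_nat k * R\<rceil>"
  have "{a. s a \<noteq> 0 \<and> wdot \<omega> a \<le> B} \<subseteq> (\<lambda>z i. of_int (z i) / of_nat k) ` {z :: 'n \<Rightarrow> int. \<forall>i. z i \<in> {-N..N}}"
  proof
    fix a assume a: "a \<in> {a. s a \<noteq> 0 \<and> wdot \<omega> a \<le> B}"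
    define z where "z i = \<lfloor>of_nat k * a i\<rfloor>" for i
    have zi: "of_int (z i) = of_nat k * a i" for i
      using k(2) a unfolding z_def by (auto simp: supp_def intro: of_int_floor_Ints)
    have zb: "\<bar>z i\<bar> \<le> N" for i
    proof -
      have "real_of_int (z i) = of_rat (of_int (z i))" by simp
      also have "\<dots> = of_nat k * of_rat (a i)" by (simp add: zi of_rat_mult)
      finally have "\<bar>real_of_int (z i)\<bar> = of_nat k * \<bar>of_rat (a i)\<bar>" by (simp add: abs_mult)
      also have "\<dots> \<le> of_nat k * R" using bound[of a i] a by (intro mult_left_mono) auto
      also have "\<dots> \<le> of_int N" by (simp add: N_def)
      finally show ?thesis by linarith
    qed
    have "z \<in> {z :: 'n \<Rightarrow> int. \<forall>i. z i \<in> {-N..N}}"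
    proof (intro CollectI allI)
      fix i
      have "\<bar>z i\<bar> \<le> N" by (rule zb)
      then show "z i \<in> {-N..N}" by (simp add: abs_le_iff)
    qed
    moreover have "a = (\<lambda>i. of_int (z i) / of_nat k)" using k(1) by (simp add: zi fun_eq_iff)
    ultimately show "a \<in> (\<lambda>z i. of_int (z i) / of_nat k) ` {z :: 'n \<Rightarrow> int. \<forall>i. z i \<in> {-N..N}}" by blast
  qed
  then show ?thesis by (rule finite_subset) (intro finite_imageI finite_int_box)
qed




lemma wt_bad:
  assumes "j \<notin> Lam \<eta>" "snd p j > 0"
  shows "wt \<omega> \<eta> p = \<infinity>"
proof -
  have "\<eta> j * ereal (of_nat (snd p j)) = \<infinity>" using assms by (simp add: Lam_def)
  then have "(\<Sum>j\<in>UNIV. \<eta> j * ereal (of_nat (snd p j))) = \<infinity>" by (subst sum_Pinfty) auto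
  then show ?thesis by (simp add: wt_def)
qed

lemma wt_good:
  assumes "\<forall>j. j \<notin> Lam \<eta> \<longrightarrow> snd p j = 0" and "\<forall>j. \<eta> j \<noteq> -\<infinity>"
  shows "wt \<omega> \<eta> p = ereal (wdot \<omega> (\<lambda>i. of_int (fst p i)) + (\<Sum>j\<in>UNIV. of_nat (snd p j) * real_of_ereal (\<eta> j)))"
proof -
  have t: "\<eta> j * ereal (of_nat (snd p j)) = ereal (of_nat (snd p j) * real_of_ereal (\<eta> j))" for j
  proof (cases "j \<in> Lam \<eta>")
    case True
    then obtain x where "\<eta> j = ereal x" using assms(2) by (cases "\<eta> j") (auto simp: Lam_def)
    then show ?thesis by (simp add: mult.commute)
  next
    case False then show ?thesis using assms(1) by (simp add: zero_ereal_def[symmetric])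
  qed
  have "(\<Sum>j\<in>UNIV. \<eta> j * ereal (of_nat (snd p j))) = ereal (\<Sum>j\<in>UNIV. of_nat (snd p j) * real_of_ereal (\<eta> j))"
    by (simp add: t sum_ereal)
  moreover have "(\<Sum>i\<in>UNIV. \<omega> i * real_of_int (fst p i)) = wdot \<omega> (\<lambda>i. of_int (fst p i))"
    by (simp add: wdot_def)
  ultimately show ?thesis by (simp add: wt_def)
qed

lemma in_p_lookup:
  assumes "ord_p \<omega> \<eta> g \<noteq> \<infinity>"
  shows "Poly_Mapping.lookup (in_p \<omega> \<eta> g) p = (if wt \<omega> \<eta> p = ord_p \<omega> \<eta> g then Poly_Mapping.lookup g p else 0)"
proof -
  have "finite {p. (if wt \<omega> \<eta> p = ord_p \<omega> \<eta> g then Poly_Mapping.lookup g p else 0) \<noteq> 0}"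
    by (rule finite_subset[of _ "Poly_Mapping.keys g"]) (auto simp: in_keys_iff)
  then show ?thesis using assms by (simp add: in_p_def)
qed

lemma ev_in_p:
  assumes "ord_p \<omega> \<eta> g \<noteq> \<infinity>"
  shows "ev u (in_p \<omega> \<eta> g) = (\<Sum>p\<in>Poly_Mapping.keys g.
      Poly_Mapping.single 0 (if wt \<omega> \<eta> p = ord_p \<omega> \<eta> g then Poly_Mapping.lookup g p else 0) * tm u p)"
proof -
  have "Poly_Mapping.keys (in_p \<omega> \<eta> g) \<subseteq> Poly_Mapping.keys g"
    using in_p_lookup[OF assms] by (auto simp: in_keys_iff split: if_splits)
  then show ?thesis unfolding ev_def
    by (subst ev.lext_superset[of "Poly_Mapping.keys g"]) (auto simp: in_p_lookup[OF assms])
qed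

lemma init_vanish:
  fixes \<psi> :: "'m::finite \<Rightarrow> ('n::finite,'k::comm_ring_1) series"
  assumes FB: "FinBelow \<omega> \<psi>" and Q: "Q_lin_indep \<omega>" and D: "def_data \<omega> \<psi> = (\<eta>, \<Gamma>, c)"
    and G: "Good \<omega> \<psi> g"
  shows "ev (\<lambda>j. if \<Gamma> j = (\<lambda>_. None) then 0 else Poly_Mapping.single (\<lambda>i. the (\<Gamma> j i)) (c j)) (in_p \<omega> \<eta> g) = 0"
proof -
  define m :: "'m \<Rightarrow> ('n,'k) pp" where "m j = (if \<Gamma> j = (\<lambda>_. None) then 0 else Poly_Mapping.single (\<lambda>i. the (\<Gamma> j i)) (c j))" for j
  define e where "e j = real_of_ereal (\<eta> j)" for j
  note DS = dd_struct[OF FB Q D]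
  have LamA: "(\<forall>a. \<psi> j a = 0) \<and> \<Gamma> j = (\<lambda>_. None) \<and> c j = 0 \<and> \<eta> j = \<infinity>" if "j \<notin> Lam \<eta>" for j
    using DS[of j] that by (auto simp: Lam_def)
  have "\<forall>j\<in>Lam \<eta>. \<exists>a. \<psi> j a \<noteq> 0 \<and> (\<forall>b. \<psi> j b \<noteq> 0 \<longrightarrow> b \<noteq> a \<longrightarrow> wdot \<omega> a < wdot \<omega> b) \<and>
         \<eta> j = ereal (wdot \<omega> a) \<and> \<Gamma> j = (\<lambda>i. Some (a i)) \<and> c j = \<psi> j a"
    using DS by (auto simp: Lam_def)
  then obtain A where A: "\<And>j. j \<in> Lam \<eta> \<Longrightarrow> \<psi> j (A j) \<noteq> 0 \<and> (\<forall>b. \<psi> j b \<noteq> 0 \<longrightarrow> b \<noteq> A j \<longrightarrow> wdot \<omega> (A j) < wdot \<omega> b) \<and>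
         \<eta> j = ereal (wdot \<omega> (A j)) \<and> \<Gamma> j = (\<lambda>i. Some (A j i)) \<and> c j = \<psi> j (A j)"
    by metis
  have eA: "e j = wdot \<omega> (A j)" if "j \<in> Lam \<eta>" for j using A[OF that] by (simp add: e_def)
  have mA: "m j = Poly_Mapping.single (A j) (\<psi> j (A j))" if "j \<in> Lam \<eta>" for j
    using A[OF that] by (auto simp: m_def fun_eq_iff)
  have m0: "m j = 0" if "j \<notin> Lam \<eta>" for j using LamA[OF that] by (simp add: m_def)
  have supp: "j \<in> Lam \<eta> \<and> wdot \<omega> (A j) \<le> wdot \<omega> \<gamma>" if "\<psi> j \<gamma> \<noteq> 0" for j \<gamma>
  proof -
    have j: "j \<in> Lam \<eta>" using LamA that by blast
    then show ?thesis using A[OF j] that by (cases "\<gamma> = A j") (auto intro: less_imp_le)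
  qed
  have etaninf: "\<forall>j. \<eta> j \<noteq> -\<infinity>"
  proof
    fix j show "\<eta> j \<noteq> -\<infinity>" by (cases "j \<in> Lam \<eta>") (use A LamA in auto)
  qed
  obtain \<mu> where \<mu>: "\<forall>j\<in>UNIV. \<mu> \<le> e j" using finite_lower_bound[of "UNIV :: 'm set" e] by auto
  obtain cg where cg: "\<forall>W u. approx \<omega> \<psi> \<mu> W u \<longrightarrow> LB \<omega> (ev u g) (W + cg)"
    using G unfolding Good_def by blast
  show ?thesis
  proof (cases "ord_p \<omega> \<eta> g = \<infinity>")
    case True then show ?thesis by (simp add: in_p_def)
  next
    case False
    let ?o = "ord_p \<omega> \<eta> g"
    define rw where "rw p = wdot \<omega> (\<lambda>i. of_int (fst p i)) + (\<Sum>j\<in>UNIV. of_nat (snd p j) * e j)" for p :: "('n,'m) lexp"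
    define bad where "bad p \<longleftrightarrow> (\<exists>j. j \<notin> Lam \<eta> \<and> snd p j > 0)" for p :: "('n,'m) lexp"
    have wt_b: "wt \<omega> \<eta> p = \<infinity>" if "bad p" for p using that wt_bad unfolding bad_def by blast
    have wt_g: "wt \<omega> \<eta> p = ereal (rw p)" if "\<not> bad p" for p
      using wt_good[of \<eta> p \<omega>] that etaninf unfolding bad_def rw_def e_def by auto
    have kne: "Poly_Mapping.keys g \<noteq> {}" using False by (auto simp: ord_p_def top_ereal_def)
    have "?o = Min (wt \<omega> \<eta> ` Poly_Mapping.keys g)" unfolding ord_p_def using kne by (simp add: cInf_eq_Min)
    then have "?o \<in> wt \<omega> \<eta> ` Poly_Mapping.keys g" using kne by (simp add: Min_in)
    then obtain p0 where p0: "p0 \<in> Poly_Mapping.keys g" "wt \<omega> \<eta> p0 = ?o" by auto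
    have "\<not> bad p0" using p0(2) False wt_b by metis
    define r where "r = rw p0"
    have o_r: "?o = ereal r" using p0 wt_g \<open>\<not> bad p0\<close> by (simp add: r_def)
    have ole: "?o \<le> wt \<omega> \<eta> p" if "p \<in> Poly_Mapping.keys g" for p
      unfolding ord_p_def using that by (simp add: Inf_lower)
    obtain E0 where E0: "\<forall>j\<in>UNIV. E0 \<le> - e j" using finite_lower_bound[of "UNIV :: 'm set" "\<lambda>j. - e j"] by auto
    define W where "W = max (r - cg) (- E0) + 1"
    have We: "e j < W" for j
    proof -
      have "E0 \<le> - e j" using E0 by blast
      then show ?thesis unfolding W_def by linarith
    qed
    have Wr: "r < W + cg" by (simp add: W_def)
    define u :: "'m \<Rightarrow> ('n,'k) pp" where "u j = Abs_poly_mapping (\<lambda>\<gamma>. if wdot \<omega> \<gamma> < W then \<psi> j \<gamma> else 0)" for j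
    have lu: "Poly_Mapping.lookup (u j) \<gamma> = (if wdot \<omega> \<gamma> < W then \<psi> j \<gamma> else 0)" for j \<gamma>
    proof -
      have "finite {\<gamma>. (if wdot \<omega> \<gamma> < W then \<psi> j \<gamma> else 0) \<noteq> 0}"
        by (rule finite_subset[of _ "{\<gamma>. \<psi> j \<gamma> \<noteq> 0 \<and> wdot \<omega> \<gamma> \<le> W}"]) (use FB in \<open>auto simp: FinBelow_def\<close>)
      then show ?thesis by (simp add: u_def)
    qed
    have LBu: "LB \<omega> (u j) (e j)" for j
      unfolding LB_def
    proof
      fix \<gamma> assume "\<gamma> \<in> Poly_Mapping.keys (u j)"
      then have "\<psi> j \<gamma> \<noteq> 0" by (simp add: in_keys_iff lu split: if_splits)
      then show "e j \<le> wdot \<omega> \<gamma>" using supp eA by metis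
    qed
    have ap: "approx \<omega> \<psi> \<mu> W u"
      unfolding approx_def
    proof (intro conjI allI impI)
      fix j \<gamma> assume "wdot \<omega> \<gamma> < W" then show "Poly_Mapping.lookup (u j) \<gamma> = \<psi> j \<gamma>" by (simp add: lu)
    next
      fix j show "LB \<omega> (u j) \<mu>" using LBu[of j] \<mu> by (auto intro: LB_mono)
    next
      fix j \<gamma> assume "\<psi> j \<gamma> \<noteq> 0"
      then have "e j \<le> wdot \<omega> \<gamma>" using supp eA by metis
      then show "\<mu> \<le> wdot \<omega> \<gamma>" using \<mu> by (meson UNIV_I order_trans)
    qed
    have LBs_evu: "LBs \<omega> (ev u g) r"
      using cg ap Wr by (auto intro: LBs_of_LB)
    have nearj: "near \<omega> (u j) (m j) (e j)" for j
    proof (cases "j \<in> Lam \<eta>")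
      case False
      have "u j = 0" by (rule poly_mapping_eqI) (use LamA[OF False] in \<open>simp add: lu\<close>)
      then show ?thesis using m0[OF False] by (simp add: near_def)
    next
      case True
      have LBm: "LB \<omega> (m j) (e j)" using mA[OF True] eA[OF True] by (simp add: LB_single)
      have "LBs \<omega> (u j - m j) (e j)" unfolding LBs_def
      proof
        fix \<gamma> assume g: "\<gamma> \<in> Poly_Mapping.keys (u j - m j)"
        show "e j < wdot \<omega> \<gamma>"
        proof (cases "\<gamma> = A j")
          case True
          have "wdot \<omega> (A j) < W" using We[of j] eA \<open>j \<in> Lam \<eta>\<close> by simp
          then have "Poly_Mapping.lookup (u j - m j) \<gamma> = 0"
            using True mA[OF \<open>j \<in> Lam \<eta>\<close>] by (simp add: lookup_minus lu)
          then show ?thesis using g by (simp add: in_keys_iff)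
        next
          case False
          then have "\<psi> j \<gamma> \<noteq> 0" using g mA[OF True]
            by (auto simp: in_keys_iff lookup_minus lu lookup_single when_def split: if_splits)
          then show ?thesis using A[OF True] False eA[OF True] by auto
        qed
      qed
      then show ?thesis using LBu LBm by (simp add: near_def)
    qed
    have neartm: "near \<omega> (tm u p) (tm m p) (rw p)" for p
      unfolding tm_def rw_def
      by (intro near_mult near_refl LB_xm near_prod near_power nearj)
    have UBm: "UB \<omega> (m j) (e j)" for j
      by (cases "j \<in> Lam \<eta>") (auto simp: mA eA m0 UB_single)
    have UBtm: "UB \<omega> (tm m p) (rw p)" for p
      unfolding tm_def rw_def
      by (intro UB_mult UB_prod UB_power UBm) (simp add: xm_def UB_single)
    have badz: "tm u p = 0 \<and> tm m p = 0" if "bad p" for p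
    proof -
      from that obtain j where j: "j \<notin> Lam \<eta>" "snd p j > 0" by (auto simp: bad_def)
      have "u j = 0" by (rule poly_mapping_eqI) (use LamA[OF j(1)] in \<open>simp add: lu\<close>)
      then have "(\<Prod>j\<in>UNIV. u j ^ snd p j) = 0" "(\<Prod>j\<in>UNIV. m j ^ snd p j) = 0"
        using j m0[OF j(1)] by (auto intro!: prod_zero bexI[of _ j] simp: zero_power)
      then show ?thesis by (simp add: tm_def)
    qed
    define Dif where "Dif = (\<Sum>p\<in>Poly_Mapping.keys g. Poly_Mapping.single 0 (Poly_Mapping.lookup g p) * tm u p -
        Poly_Mapping.single 0 (if wt \<omega> \<eta> p = ?o then Poly_Mapping.lookup g p else 0) * tm m p)"
    have evdiff: "ev m (in_p \<omega> \<eta> g) = ev u g - Dif"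
      unfolding Dif_def ev_in_p[OF False] by (simp add: ev_expand sum_subtractf)
    have "LBs \<omega> Dif r" unfolding Dif_def
    proof (rule LBs_sum)
      fix p assume pk: "p \<in> Poly_Mapping.keys g"
      show "LBs \<omega> (Poly_Mapping.single 0 (Poly_Mapping.lookup g p) * tm u p -
        Poly_Mapping.single 0 (if wt \<omega> \<eta> p = ?o then Poly_Mapping.lookup g p else 0) * tm m p) r"
      proof (cases "bad p")
        case True then show ?thesis using badz by simp
      next
        case nb: False
        show ?thesis
        proof (cases "wt \<omega> \<eta> p = ?o")
          case True
          then have "rw p = r" using wt_g[OF nb] o_r by simp
          then have "LBs \<omega> (tm u p - tm m p) r" using neartm[of p] by (simp add: near_def)
          then have "LBs \<omega> (Poly_Mapping.single 0 (Poly_Mapping.lookup g p) * (tm u p - tm m p)) r"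
            by (rule LBs_single0_mult)
          then show ?thesis using True by (simp add: right_diff_distrib)
        next
          case False
          then have "ereal r < ereal (rw p)" using ole[OF pk] wt_g[OF nb] o_r by (metis order_le_less)
          then have "r < rw p" by simp
          then have "LBs \<omega> (tm u p) r" using neartm[of p] by (auto simp: near_def intro: LBs_of_LB)
          then show ?thesis using False by (simp add: LBs_single0_mult)
        qed
      qed
    qed
    then have LBsm: "LBs \<omega> (ev m (in_p \<omega> \<eta> g)) r" using LBs_evu evdiff by (simp add: LBs_diff)
    have UBm': "UB \<omega> (ev m (in_p \<omega> \<eta> g)) r" unfolding ev_in_p[OF False]
    proof (rule UB_sum)
      fix p assume pk: "p \<in> Poly_Mapping.keys g"
      show "UB \<omega> (Poly_Mapping.single 0 (if wt \<omega> \<eta> p = ?o then Poly_Mapping.lookup g p else 0) * tm m p) r"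
      proof (cases "wt \<omega> \<eta> p = ?o")
        case True
        then have nb: "\<not> bad p" using wt_b False by metis
        then have "rw p = r" using True wt_g[OF nb] o_r by simp
        then show ?thesis using True UBtm[of p] by (simp add: UB_single0_mult)
      qed simp
    qed
    have "Poly_Mapping.keys (ev m (in_p \<omega> \<eta> g)) = {}"
    proof (rule ccontr)
      assume "Poly_Mapping.keys (ev m (in_p \<omega> \<eta> g)) \<noteq> {}"
      then obtain \<gamma> where "\<gamma> \<in> Poly_Mapping.keys (ev m (in_p \<omega> \<eta> g))" by blast
      then have "r < wdot \<omega> \<gamma>" "wdot \<omega> \<gamma> \<le> r" using LBsm UBm' unfolding LBs_def UB_def by blast+
      then show False by simp
    qed
    then have "ev m (in_p \<omega> \<eta> g) = 0" by simp
    moreover have "m = (\<lambda>j. if \<Gamma> j = (\<lambda>_. None) then 0 else Poly_Mapping.single (\<lambda>i. the (\<Gamma> j i)) (c j))"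
      by (simp add: m_def fun_eq_iff)
    ultimately show ?thesis by simp
  qed
qed




definition cs :: "('n,'k::comm_ring_1) pp \<Rightarrow> 'k" where
  "cs P = lext id (\<lambda>_. 1) P"

interpretation cs: lhom "id" "\<lambda>_::('a \<Rightarrow> rat). (1::'b::comm_ring_1)"
  by unfold_locales auto

lemma cs_single: "cs (Poly_Mapping.single a x) = x"
  by (simp add: cs_def cs.lext_single)

lemma cs_zero[simp]: "cs 0 = 0"
  by (simp add: cs_def cs.lext_zero)

lemma ev_ideal: "is_ideal {f. ev u f = 0}"
  unfolding is_ideal_def by (auto simp: ev_add ev_mult)

lemma single_power_ex:
  assumes "(x::'k::field) \<noteq> 0"
  shows "\<exists>\<gamma> d. d \<noteq> 0 \<and> Poly_Mapping.single (a::'a::comm_monoid_add) x ^ n = Poly_Mapping.single \<gamma> d"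
proof (induction n)
  case 0 then show ?case by (intro exI[of _ 0] exI[of _ 1]) simp
next
  case (Suc n)
  then obtain \<gamma> d where "d \<noteq> 0" "Poly_Mapping.single a x ^ n = Poly_Mapping.single \<gamma> d" by blast
  then show ?case using assms by (intro exI[of _ "a + \<gamma>"] exI[of _ "x * d"]) (simp add: mult_single)
qed

lemma prod_single_ex:
  assumes "\<And>j. j \<in> A \<Longrightarrow> \<exists>\<gamma> d. d \<noteq> 0 \<and> F j = Poly_Mapping.single \<gamma> (d::'k::field)"
  shows "\<exists>\<gamma> d. d \<noteq> 0 \<and> prod F A = Poly_Mapping.single (\<gamma>::'a::comm_monoid_add) d"
  using assms
proof (induction A rule: infinite_finite_induct)
  case (infinite A) then show ?case by (intro exI[of _ 0] exI[of _ 1]) simp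
next
  case empty then show ?case by (intro exI[of _ 0] exI[of _ 1]) simp
next
  case (insert x A)
  then obtain \<gamma> d where 1: "d \<noteq> 0" "prod F A = Poly_Mapping.single \<gamma> d" by blast
  obtain \<gamma>' d' where 2: "d' \<noteq> 0" "F x = Poly_Mapping.single \<gamma>' d'" using insert.prems by blast
  show ?case using 1 2 insert.hyps by (intro exI[of _ "\<gamma>' + \<gamma>"] exI[of _ "d' * d"]) (simp add: mult_single)
qed

lemma starting:
  fixes \<psi> :: "'m::finite \<Rightarrow> ('n::finite,'k::field) series"
  assumes FB: "FinBelow \<omega> \<psi>" and Q: "Q_lin_indep \<omega>" and D: "def_data \<omega> \<psi> = (\<eta>, \<Gamma>, c)"
    and G: "\<forall>g\<in>J. Good \<omega> \<psi> g"
  shows "starting_set \<omega> J (\<eta>, \<Gamma>, c)"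
proof -
  define m :: "'m \<Rightarrow> ('n,'k) pp" where "m j = (if \<Gamma> j = (\<lambda>_. None) then 0 else Poly_Mapping.single (\<lambda>i. the (\<Gamma> j i)) (c j))" for j
  note DS = dd_struct[OF FB Q D]
  have LamA: "\<Gamma> j = (\<lambda>_. None) \<and> c j = 0" if "j \<notin> Lam \<eta>" for j
    using DS[of j] that by (auto simp: Lam_def)
  have LamB: "\<exists>a. c j \<noteq> 0 \<and> \<eta> j = ereal (wdot \<omega> a) \<and> \<Gamma> j = (\<lambda>i. Some (a i))" if "j \<in> Lam \<eta>" for j
    using DS[of j] that by (auto simp: Lam_def)
  have NoneC: "c j = 0" if "\<Gamma> j = (\<lambda>_. None)" for j
    using DS[of j] that by (auto simp: fun_eq_iff)
  have sub: "In_ideal \<omega> \<eta> J \<subseteq> {f. ev m f = 0}"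
    unfolding In_ideal_def
  proof (rule ideal_gen_sub[OF ev_ideal])
    show "in_p \<omega> \<eta> ` J \<union> yvar ` (- Lam \<eta>) \<subseteq> {f. ev m f = 0}"
    proof
      fix f assume "f \<in> in_p \<omega> \<eta> ` J \<union> yvar ` (- Lam \<eta>)"
      then show "f \<in> {f. ev m f = 0}"
      proof
        assume "f \<in> in_p \<omega> \<eta> ` J"
        then obtain g where "g \<in> J" "f = in_p \<omega> \<eta> g" by blast
        then show ?thesis using init_vanish[OF FB Q D, of g] G by (simp add: m_def[abs_def])
      next
        assume "f \<in> yvar ` (- Lam \<eta>)"
        then obtain j where "j \<notin> Lam \<eta>" "f = yvar j" by blast
        then show ?thesis using LamA by (simp add: ev_yvar m_def)
      qed
    qed
  qed
  have os1: "\<forall>i. \<eta> i \<noteq> -\<infinity>"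
  proof
    fix i show "\<eta> i \<noteq> -\<infinity>" using DS[of i] by auto
  qed
  have os2: "\<forall>i\<in>Lam \<eta>. (\<forall>j. \<Gamma> i j \<noteq> None) \<and> ereal (wdot \<omega> (\<lambda>j. the (\<Gamma> i j))) = \<eta> i \<and> c i \<noteq> 0"
  proof
    fix i assume "i \<in> Lam \<eta>"
    then obtain a where a: "c i \<noteq> 0" "\<eta> i = ereal (wdot \<omega> a)" "\<Gamma> i = (\<lambda>j. Some (a j))" using LamB by blast
    show "(\<forall>j. \<Gamma> i j \<noteq> None) \<and> ereal (wdot \<omega> (\<lambda>j. the (\<Gamma> i j))) = \<eta> i \<and> c i \<noteq> 0"
      using a by simp
  qed
  have os3: "\<forall>i. i \<notin> Lam \<eta> \<longrightarrow> (\<forall>j. \<Gamma> i j = None) \<and> c i = 0"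
    using LamA by (simp add: fun_eq_iff)
  have os: "omega_set \<omega> (\<eta>, \<Gamma>, c)"
    unfolding omega_set_def prod.case using os1 os2 os3 by blast
  have tau: "in_tau \<omega> \<eta> J"
    unfolding in_tau_def
  proof
    assume "\<exists>c0 a b. c0 \<noteq> 0 \<and> (\<forall>j. j \<notin> Lam \<eta> \<longrightarrow> b j = 0) \<and> mono c0 a b \<in> In_ideal \<omega> \<eta> J"
    then obtain c0 a b where c0: "c0 \<noteq> 0" and b: "\<forall>j. j \<notin> Lam \<eta> \<longrightarrow> b j = 0"
      and mem: "mono c0 a b \<in> In_ideal \<omega> \<eta> J" by blast
    have z: "ev m (mono c0 a b) = 0" using sub mem by blast
    have "\<exists>\<gamma> d. d \<noteq> 0 \<and> m j ^ b j = Poly_Mapping.single \<gamma> d" for j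
    proof (cases "j \<in> Lam \<eta>")
      case True
      then obtain a where a: "c j \<noteq> 0" "\<Gamma> j = (\<lambda>i. Some (a i))" using LamB by blast
      then have "m j = Poly_Mapping.single a (c j)" by (auto simp: m_def fun_eq_iff)
      then show ?thesis using single_power_ex[OF a(1)] by simp
    next
      case False
      then show ?thesis using b by (intro exI[of _ 0] exI[of _ 1]) simp
    qed
    then obtain \<gamma> d where gd: "d \<noteq> 0" "(\<Prod>j\<in>UNIV. m j ^ b j) = Poly_Mapping.single \<gamma> d"
      using prod_single_ex[of UNIV "\<lambda>j. m j ^ b j"] by blast
    have "ev m (mono c0 a b) = Poly_Mapping.single (0 + ((\<lambda>i. of_int (a i)) + \<gamma>)) (c0 * (1 * d))"
      by (simp add: ev_mono tm_def xm_def gd mult_single)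
    then have "Poly_Mapping.single (0 + ((\<lambda>i. of_int (a i)) + \<gamma>)) (c0 * (1 * d)) = 0" using z by simp
    then have "c0 * (1 * d) = 0" by (metis lookup_single_eq lookup_zero)
    then show False using c0 gd(1) by simp
  qed
  have ev1: "eval_one f c = 0" if "f \<in> In_ideal \<omega> \<eta> J" for f
  proof -
    have "ev m f = 0" using sub that by blast
    then have "cs (ev m f) = 0" by (simp add: cs_def cs.lext_zero)
    moreover have "cs (m j) = c j" for j by (simp add: m_def cs_single NoneC)
    then have "cs (tm m p) = (\<Prod>j\<in>UNIV. c j ^ snd p j)" for p
      by (simp add: tm_def xm_def cs_def cs.lext_mult cs.lext_prod cs.lext_power cs.lext_single)
    then have "cs (ev m f) = eval_one f c"
      by (simp add: ev_expand eval_one_def cs_def cs.lext_sum cs.lext_mult cs.lext_single)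
    ultimately show ?thesis by simp
  qed
  show ?thesis unfolding starting_set_def using os tau ev1 by simp
qed

lemma seq_step: "phi_seq \<omega> \<phi> (Suc i) = series_step (seq \<omega> \<phi> i) (phi_seq \<omega> \<phi> i)"
  apply (simp only: phi_seq.simps)
  apply (simp add: Defs.seq_def)
  done

theorem proposition14p3:
  fixes \<omega> :: "'n::finite \<Rightarrow> real"
    and I :: "('n, 'm::finite, 'k::field_char_0) lpoly set"
    and \<phi> :: "'m \<Rightarrow> ('n, 'k) series"
  assumes "alg_closed TYPE('k)"
    and "Q_lin_indep \<omega>"
    and "is_ideal I"
    and "admissible I"
    and "omega_solution \<omega> I \<phi>"
  shows "omega_sequence \<omega> I (seq \<omega> \<phi>)"
proof -
  note Q = assms(2)
  define Ds where "Ds = seq \<omega> \<phi>"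
  define \<psi> where "\<psi> i = phi_seq \<omega> \<phi> i" for i
  have Ds_def': "Ds i = def_data \<omega> (\<psi> i)" for i by (simp add: Ds_def \<psi>_def Defs.seq_def)
  have \<psi>Suc: "\<psi> (Suc i) = series_step (Ds i) (\<psi> i)" for i
    unfolding \<psi>_def Ds_def by (rule seq_step)
  have inv: "FinBelow \<omega> (\<psi> i) \<and> (\<forall>g\<in>ideal_seq I Ds i. Good \<omega> (\<psi> i) g)" for i
  proof (induction i)
    case 0
    have "FinBelow \<omega> \<phi>" using assms(5) finbelow_op[OF Q]
      by (auto simp: FinBelow_def omega_solution_def)
    moreover have "\<forall>g\<in>I. Good \<omega> \<phi> g"
    proof
      fix g assume "g \<in> I"
      then show "Good \<omega> \<phi> g" using assms(5) by (intro base_good) (auto simp: omega_solution_def)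
    qed
    ultimately show ?case by (simp add: \<psi>_def)
  next
    case (Suc i)
    obtain \<eta> \<Gamma> c where D: "Ds i = (\<eta>, \<Gamma>, c)" by (cases "Ds i")
    have FB: "FinBelow \<omega> (\<psi> (Suc i))"
      using FinBelow_step[of \<omega> "\<psi> i" \<Gamma> \<eta> c] Suc dG_props[of \<Gamma>] by (simp add: \<psi>Suc D)
    have "ideal_seq I Ds (Suc i) \<subseteq> {g. Good \<omega> (\<psi> (Suc i)) g}"
      unfolding ideal_seq.simps ideal_D_def
    proof (rule ideal_gen_sub[OF Good_ideal])
      show "subst_D (Ds i) ` ideal_seq I Ds i \<subseteq> {g. Good \<omega> (\<psi> (Suc i)) g}"
      proof
        fix g assume "g \<in> subst_D (Ds i) ` ideal_seq I Ds i"
        then obtain f where f: "f \<in> ideal_seq I Ds i" "g = subst_D (Ds i) f" by blast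
        have "Good \<omega> (\<psi> i) f" using Suc f(1) by blast
        then have "Good \<omega> (series_step (\<eta>, \<Gamma>, c) (\<psi> i)) (subst_D (\<eta>, \<Gamma>, c) f)"
          using transport[of \<omega> "\<psi> i" f \<eta> \<Gamma> c] D Ds_def' by simp
        then show "g \<in> {g. Good \<omega> (\<psi> (Suc i)) g}" using f D by (simp add: \<psi>Suc)
      qed
    qed
    then show ?case using FB by blast
  qed
  have S: "starting_set \<omega> (ideal_seq I Ds i) (Ds i)" for i
  proof -
    obtain \<eta> \<Gamma> c where D: "Ds i = (\<eta>, \<Gamma>, c)" by (cases "Ds i")
    show ?thesis using starting[of \<omega> "\<psi> i" \<eta> \<Gamma> c "ideal_seq I Ds i"] inv[of i] Q D Ds_def' by simp
  qed
  have T: "fst (Ds i) j > ereal (of_nat (dG (fst (snd (Ds (i - 1)))))) * fst (Ds (i - 1)) j"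
    if i1: "i \<ge> 1" and jL: "j \<in> Lam (fst (Ds i))" for i j
  proof -
    obtain i' where i': "i = Suc i'" using i1 by (cases i) auto
    obtain \<eta> \<Gamma> c where D: "Ds i' = (\<eta>, \<Gamma>, c)" by (cases "Ds i'")
    obtain \<eta>' \<Gamma>' c' where D': "Ds i = (\<eta>', \<Gamma>', c')" by (cases "Ds i")
    have D1: "def_data \<omega> (\<psi> i') = (\<eta>, \<Gamma>, c)" using D Ds_def' by simp
    have D2: "def_data \<omega> (series_step (\<eta>, \<Gamma>, c) (\<psi> i')) = (\<eta>', \<Gamma>', c')"
      using D' D Ds_def'[of i] \<psi>Suc[of i'] i' by simp
    have FB2: "FinBelow \<omega> (series_step (\<eta>, \<Gamma>, c) (\<psi> i'))"
      using inv[of "Suc i'"] \<psi>Suc[of i'] D by simp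
    have "\<eta>' j > ereal (of_nat (dG \<Gamma>)) * \<eta> j"
      using ineq_step[OF _ Q D1 FB2 D2] inv[of i'] jL D' by simp
    then show ?thesis using D D' i' by simp
  qed
  show ?thesis
    unfolding omega_sequence_def Ds_def[symmetric] using S T by blast
qed



end
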